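(* Let $n\ge2$, $r'>1$, $C_H>0$, $\alpha^*=r/n$, and let $V\ge0$ satisfy: $V(x)\le C_2e^{\delta|x|}$ for $|x|$ large, $V$ is locally bounded, and $V$ has exactly $l\ge1$ zeros $P_1,\dots,P_l$ with $V(x)=a_i|x-P_i|^{q_i}+O(|x-P_i|^{q_i+1})$ for $0<|x-P_i|\le d$ ($a_i,q_i,d>0$). Let $(m_0,w_0)$ be a minimizer of $\Gamma_{\alpha^*}$ with $\int m_0=M^*$, $C_L\int|w_0/m_0|^rm_0\,dx=1=\frac n{n+r}\int m_0^{1+r/n}dx$, and $m_0(x)\le Ce^{-\delta_1|x|}$ for some $C,\delta_1>0$. Let $q=\max_iq_i$, $Z=\{P_i:q_i=q\}$, $H_i(y)=\int a_i|x+y|^{q_i}m_0(x)dx$, $\mu_i=\min_yH_i(y)$, $\mu=\min\{\mu_i:P_i\in Z\}$. Then as $M\nearrow M^*$, $$e_{\alpha^*,M}\le(1+o(1))\frac{q+r}{q}\Big(\frac{q\mu}{r}\Big)^{\frac r{r+q}}\Big[1-\Big(\frac M{M^*}\Big)^{\frac rn}\Big]^{\frac q{r+q}} .$$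
   Context: $r=r'/(r'-1)$, $C_L=\frac1r(r'C_H)^{1/(1-r')}$; $\hat q=\frac n{n-r+1}$ if $r<n$, a fixed number in $(\frac{2n}{n+2},n)$ if $r=n$, $r$ if $r>n$. The integrand $m|w/m|^r$ means $|w|^rm^{1-r}$ where $m>0$, $0$ where $(m,w)=(0,0)$, $+\infty$ where $m=0\ne w$. $\Gamma_{\alpha^*}$ is the infimum, over pairs $(m,w)\in(L^1\cap W^{1,\hat q})\times L^1$ with $\int\nabla m\cdot\nabla\varphi=\int w\cdot\nabla\varphi$ for all $\varphi\in C_c^\infty$, $\int|x|^bm<\infty$ (fixed $b>0$), $m\ge0$, $m\not\equiv0$, of $\frac{(C_L\int m|w/m|^r)(\int m)^{r/n}}{\int m^{1+r/n}}$; $M^*=[\Gamma_{\alpha^*}(1+\alpha^* )]^{1/\alpha^*}$. $\mathcal K_M$: pairs $(m,w)\in(L^1\cap W^{1,\hat q})\times L^1$ with $\Delta m=\nabla\cdot w$ weakly, $\int Vm<\infty$, $\int m=M$, $m\ge0$; $e_{\alpha^*,M}=\inf_{\mathcal K_M}\big[C_L\int|w/m|^rm+\int Vm-\frac n{n+r}\int m^{1+r/n}\big]$. *)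

theory Defs
  imports "HOL-Analysis.Analysis"
begin

definition pderiv_dir :: "('a::euclidean_space \<Rightarrow> real) \<Rightarrow> 'a \<Rightarrow> 'a \<Rightarrow> real" where
  "pderiv_dir f i x = frechet_derivative f (at x) i"

fun Ck_fun :: "nat \<Rightarrow> ('a::euclidean_space \<Rightarrow> real) \<Rightarrow> bool" where
  "Ck_fun 0 f = continuous_on UNIV f"
| "Ck_fun (Suc k) f = (continuous_on UNIV f \<and> (\<forall>x. f differentiable (at x))
      \<and> (\<forall>i\<in>Basis. Ck_fun k (pderiv_dir f i)))"

definition smooth_fun :: "('a::euclidean_space \<Rightarrow> real) \<Rightarrow> bool" where
  "smooth_fun f \<longleftrightarrow> (\<forall>k. Ck_fun k f)"

definition test_fun :: "('a::euclidean_space \<Rightarrow> real) \<Rightarrow> bool" where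
  "test_fun \<phi> \<longleftrightarrow> smooth_fun \<phi> \<and> compact (closure {x. \<phi> x \<noteq> 0})"

definition grad :: "('a::euclidean_space \<Rightarrow> real) \<Rightarrow> 'a \<Rightarrow> 'a" where
  "grad \<phi> x = (\<Sum>i\<in>Basis. pderiv_dir \<phi> i x *\<^sub>R i)"

definition Lp_fun :: "real \<Rightarrow> ('a::euclidean_space \<Rightarrow> real) \<Rightarrow> bool" where
  "Lp_fun p f \<longleftrightarrow> f \<in> borel_measurable lborel \<and> integrable lborel (\<lambda>x. \<bar>f x\<bar> powr p)"

definition Lp_field :: "real \<Rightarrow> ('a::euclidean_space \<Rightarrow> 'a) \<Rightarrow> bool" where
  "Lp_field p g \<longleftrightarrow> g \<in> borel_measurable lborel \<and> integrable lborel (\<lambda>x. norm (g x) powr p)"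

definition weak_grad :: "('a::euclidean_space \<Rightarrow> real) \<Rightarrow> ('a \<Rightarrow> 'a) \<Rightarrow> bool" where
  "weak_grad m g \<longleftrightarrow> (\<forall>\<phi>. test_fun \<phi> \<longrightarrow> (\<forall>i\<in>Basis.
      (\<integral>x. m x * pderiv_dir \<phi> i x \<partial>lborel) = - (\<integral>x. (g x \<bullet> i) * \<phi> x \<partial>lborel)))"

definition W1p :: "real \<Rightarrow> ('a::euclidean_space \<Rightarrow> real) \<Rightarrow> bool" where
  "W1p p m \<longleftrightarrow> Lp_fun p m \<and> (\<exists>g. weak_grad m g \<and> Lp_field p g)"

text \<open>Pairs (m,w) in (L^1 \<inter> W^{1,qhat}) \<times> L^1 with \<Delta>m = div w weakly, i.e.
  \<integral> \<nabla>m\<cdot>\<nabla>\<phi> = \<integral> w\<cdot>\<nabla>\<phi> for all test functions \<phi> (\<nabla>m the weak gradient).\<close>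
definition weak_pair :: "real \<Rightarrow> ('a::euclidean_space \<Rightarrow> real) \<Rightarrow> ('a \<Rightarrow> 'a) \<Rightarrow> bool" where
  "weak_pair qhat m w \<longleftrightarrow>
     Lp_fun 1 m \<and> integrable lborel m \<and> w \<in> borel_measurable lborel \<and> integrable lborel w \<and>
     (\<exists>g. weak_grad m g \<and> Lp_field qhat g \<and> Lp_fun qhat m \<and>
        (\<forall>\<phi>. test_fun \<phi> \<longrightarrow>
           (\<integral>x. g x \<bullet> grad \<phi> x \<partial>lborel) = (\<integral>x. w x \<bullet> grad \<phi> x \<partial>lborel)))"

definition conj_exp :: "real \<Rightarrow> real" where
  "conj_exp r' = r' / (r' - 1)"

definition C_L :: "real \<Rightarrow> real \<Rightarrow> real" where
  "C_L r' CH = (1 / conj_exp r') * (r' * CH) powr (1 / (1 - r'))"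

definition qhat_ok :: "nat \<Rightarrow> real \<Rightarrow> real \<Rightarrow> bool" where
  "qhat_ok n r qh \<longleftrightarrow>
     (r < real n \<longrightarrow> qh = real n / (real n - r + 1)) \<and>
     (r = real n \<longrightarrow> 2 * real n / (real n + 2) < qh \<and> qh < real n) \<and>
     (r > real n \<longrightarrow> qh = r)"

text \<open>Integrand m |w/m|^r with the stated conventions.\<close>
definition lag_dens :: "real \<Rightarrow> real \<Rightarrow> 'a::real_normed_vector \<Rightarrow> ennreal" where
  "lag_dens r mx wx = (if mx > 0 then ennreal (norm wx powr r * mx powr (1 - r))
                       else if wx = 0 then 0 else \<infinity>)"

definition kin :: "real \<Rightarrow> ('a::euclidean_space \<Rightarrow> real) \<Rightarrow> ('a \<Rightarrow> 'a) \<Rightarrow> ennreal" where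
  "kin r m w = (\<integral>\<^sup>+ x. lag_dens r (m x) (w x) \<partial>lborel)"

definition pot :: "real \<Rightarrow> ('a::euclidean_space \<Rightarrow> real) \<Rightarrow> ennreal" where
  "pot p m = (\<integral>\<^sup>+ x. ennreal (m x powr p) \<partial>lborel)"

definition Gamma_adm :: "real \<Rightarrow> real \<Rightarrow> (('a::euclidean_space \<Rightarrow> real) \<times> ('a \<Rightarrow> 'a)) set" where
  "Gamma_adm qhat b = {(m, w). weak_pair qhat m w \<and>
      (\<integral>\<^sup>+ x. ennreal (norm x powr b * m x) \<partial>lborel) < \<infinity> \<and>
      (\<forall>x. m x \<ge> 0) \<and> \<not> (AE x in lborel. m x = 0)}"

definition Gamma_fun :: "real \<Rightarrow> real \<Rightarrow> ('a::euclidean_space \<Rightarrow> real) \<Rightarrow> ('a \<Rightarrow> 'a) \<Rightarrow> ereal" where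
  "Gamma_fun r' CH m w =
     (let r = conj_exp r'; n = real DIM('a) in
      ereal (C_L r' CH) * enn2ereal (kin r m w) * ereal ((\<integral>x. m x \<partial>lborel) powr (r / n))
        / enn2ereal (pot (1 + r / n) m))"

definition Gamma_star :: "real \<Rightarrow> real \<Rightarrow> real \<Rightarrow> real \<Rightarrow> 'a::euclidean_space itself \<Rightarrow> ereal" where
  "Gamma_star r' CH qhat b _ = (INF mw \<in> (Gamma_adm qhat b :: (('a \<Rightarrow> real) \<times> ('a \<Rightarrow> 'a)) set).
      Gamma_fun r' CH (fst mw) (snd mw))"

definition M_star :: "real \<Rightarrow> real \<Rightarrow> real \<Rightarrow> real \<Rightarrow> 'a::euclidean_space itself \<Rightarrow> real" where
  "M_star r' CH qhat b T =
     (let \<alpha> = conj_exp r' / real DIM('a) in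
      (real_of_ereal (Gamma_star r' CH qhat b T) * (1 + \<alpha>)) powr (1 / \<alpha>))"

definition K_set :: "real \<Rightarrow> ('a::euclidean_space \<Rightarrow> real) \<Rightarrow> real \<Rightarrow> (('a \<Rightarrow> real) \<times> ('a \<Rightarrow> 'a)) set" where
  "K_set qhat V M = {(m, w). weak_pair qhat m w \<and>
      (\<integral>\<^sup>+ x. ennreal (V x * m x) \<partial>lborel) < \<infinity> \<and>
      (\<integral>x. m x \<partial>lborel) = M \<and> (\<forall>x. m x \<ge> 0)}"

definition energy :: "real \<Rightarrow> real \<Rightarrow> ('a::euclidean_space \<Rightarrow> real) \<Rightarrow> ('a \<Rightarrow> real) \<Rightarrow> ('a \<Rightarrow> 'a) \<Rightarrow> ereal" where
  "energy r' CH V m w =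
     (let r = conj_exp r'; n = real DIM('a) in
      ereal (C_L r' CH) * enn2ereal (kin r m w)
      + enn2ereal (\<integral>\<^sup>+ x. ennreal (V x * m x) \<partial>lborel)
      - ereal (n / (n + r)) * enn2ereal (pot (1 + r / n) m))"

definition e_ground :: "real \<Rightarrow> real \<Rightarrow> real \<Rightarrow> ('a::euclidean_space \<Rightarrow> real) \<Rightarrow> real \<Rightarrow> ereal" where
  "e_ground r' CH qhat V M = (INF mw \<in> K_set qhat V M. energy r' CH V (fst mw) (snd mw))"

end

theory Submission
  imports Defs "HOL-Probability.Distributions"
begin

lemma nn_integral_affine:
  fixes f :: "'a::euclidean_space \<Rightarrow> ennreal" and c :: real
  assumes [measurable]: "f \<in> borel_measurable borel" and c: "c \<noteq> 0"
  shows "(\<integral>\<^sup>+x. f x \<partial>lborel) = ennreal (\<bar>c\<bar>^DIM('a)) * (\<integral>\<^sup>+x. f (t + c *\<^sub>R x) \<partial>lborel)"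
  by (subst lborel_affine[OF c, of t]) (simp add: nn_integral_density nn_integral_distr nn_integral_cmult)

lemma lborel_integrable_affine:
  fixes f :: "'a::euclidean_space \<Rightarrow> 'b :: {banach, second_countable_topology}"
  assumes f: "integrable lborel f" and c: "c \<noteq> 0"
  shows "integrable lborel (\<lambda>x. f (t + c *\<^sub>R x))"
  using f f[THEN borel_measurable_integrable] c unfolding integrable_iff_bounded
  by (subst (asm) nn_integral_affine[where c=c and t=t]) (auto simp: ennreal_mult_less_top)

lemma lborel_integrable_affine_iff:
  fixes f :: "'a::euclidean_space \<Rightarrow> 'b :: {banach, second_countable_topology}"
  assumes c: "c \<noteq> 0"
  shows "integrable lborel (\<lambda>x. f (t + c *\<^sub>R x)) \<longleftrightarrow> integrable lborel f"
proof
  assume "integrable lborel (\<lambda>x. f (t + c *\<^sub>R x))"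
  from lborel_integrable_affine[OF this, of "1/c" "- t /\<^sub>R c"] c show "integrable lborel f"
    by (simp add: algebra_simps)
qed (use lborel_integrable_affine c in auto)

lemma lborel_integral_affine:
  fixes f :: "'a::euclidean_space \<Rightarrow> 'b :: {banach, second_countable_topology}" and c :: real
  assumes c: "c \<noteq> 0" shows "(\<integral>x. f x \<partial> lborel) = (\<bar>c\<bar>^DIM('a)) *\<^sub>R (\<integral>x. f (t + c *\<^sub>R x) \<partial>lborel)"
proof cases
  assume f[measurable]: "integrable lborel f" then show ?thesis
    using c f f[THEN borel_measurable_integrable] f[THEN lborel_integrable_affine, of c t]
    by (subst lborel_affine[OF c, of t])
       (simp add: integral_density integral_distr)
next
  assume "\<not> integrable lborel f" with c show ?thesis
    by (simp add: lborel_integrable_affine_iff not_integrable_integral_eq)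
qed

lemma hasderiv_affine:
  fixes f :: "'a::euclidean_space \<Rightarrow> real"
  assumes "f differentiable (at (t + c *\<^sub>R x))"
  shows "((\<lambda>x. a * f (t + c *\<^sub>R x)) has_derivative
           (\<lambda>h. a * frechet_derivative f (at (t + c *\<^sub>R x)) (c *\<^sub>R h))) (at x)"
proof -
  have d: "(f has_derivative frechet_derivative f (at (t + c *\<^sub>R x))) (at (t + c *\<^sub>R x))"
    using assms frechet_derivative_works by blast
  have a: "((\<lambda>x. t + c *\<^sub>R x) has_derivative (\<lambda>h. c *\<^sub>R h)) (at x)"
    by (auto intro!: derivative_eq_intros)
  have "((\<lambda>x. f (t + c *\<^sub>R x)) has_derivative
           (\<lambda>h. frechet_derivative f (at (t + c *\<^sub>R x)) (c *\<^sub>R h))) (at x)"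
    using has_derivative_compose[OF a d] by (simp add: o_def)
  then show ?thesis by (intro derivative_eq_intros) auto
qed

lemma pderiv_affine:
  fixes f :: "'a::euclidean_space \<Rightarrow> real"
  assumes "f differentiable (at (t + c *\<^sub>R x))"
  shows "pderiv_dir (\<lambda>x. a * f (t + c *\<^sub>R x)) i x = a * c * pderiv_dir f i (t + c *\<^sub>R x)"
proof -
  have "pderiv_dir (\<lambda>x. a * f (t + c *\<^sub>R x)) i x = a * frechet_derivative f (at (t + c *\<^sub>R x)) (c *\<^sub>R i)"
    unfolding pderiv_dir_def using frechet_derivative_at[OF hasderiv_affine[OF assms, of a]] by metis
  also have "\<dots> = a * c * pderiv_dir f i (t + c *\<^sub>R x)"
    using linear_frechet_derivative[OF assms] unfolding pderiv_dir_def
    by (simp add: linear_scale)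
  finally show ?thesis .
qed

lemma Ck_affine:
  fixes f :: "'a::euclidean_space \<Rightarrow> real"
  shows "Ck_fun k f \<Longrightarrow> Ck_fun k (\<lambda>x. a * f (t + c *\<^sub>R x))"
proof (induction k arbitrary: f a)
  case 0
  then show ?case by (auto intro!: continuous_intros continuous_on_compose2[of UNIV f])
next
  case (Suc k)
  then have cf: "continuous_on UNIV f" and df: "\<And>x. f differentiable (at x)"
    and pf: "\<And>i. i \<in> Basis \<Longrightarrow> Ck_fun k (pderiv_dir f i)" by auto
  have "continuous_on UNIV (\<lambda>x. a * f (t + c *\<^sub>R x))"
    using cf by (auto intro!: continuous_intros continuous_on_compose2[of UNIV f])
  moreover have "(\<lambda>x. a * f (t + c *\<^sub>R x)) differentiable (at x)" for x
    using hasderiv_affine[where f=f and t=t and c=c and x=x and a=a] df unfolding differentiable_def by blast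
  moreover have "pderiv_dir (\<lambda>x. a * f (t + c *\<^sub>R x)) i = (\<lambda>x. a * c * pderiv_dir f i (t + c *\<^sub>R x))" for i
    using pderiv_affine[OF df] by blast
  ultimately show ?case using Suc.IH pf by auto
qed

lemma meas_aff:
  fixes m :: "'a::euclidean_space \<Rightarrow> 'b::topological_space"
  assumes "m \<in> borel_measurable lborel"
  shows "(\<lambda>x. m (t + c *\<^sub>R x)) \<in> borel_measurable lborel"
proof -
  have "(\<lambda>x::'a. t + c *\<^sub>R x) \<in> borel_measurable lborel" by measurable
  then have "(\<lambda>x::'a. t + c *\<^sub>R x) \<in> lborel \<rightarrow>\<^sub>M lborel" by (simp add: measurable_lborel1)
  from measurable_compose[OF this assms] show ?thesis by (simp add: o_def)
qed

lemma compact_closure_image_aff: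
  fixes S :: "'a::euclidean_space set"
  assumes "compact (closure S)"
  shows "compact (closure ((\<lambda>y. t + c *\<^sub>R y) ` S))"
proof -
  let ?g = "\<lambda>y::'a. t + c *\<^sub>R y"
  have K: "compact (?g ` closure S)"
    by (intro compact_continuous_image assms continuous_intros)
  have "closure (?g ` S) \<subseteq> ?g ` closure S"
    by (intro closure_minimal image_mono closure_subset compact_imp_closed K)
  then show ?thesis using K
    by (metis closed_closure compact_Int_closed inf.absorb_iff2)
qed

lemma test_fun_affine:
  fixes \<phi> :: "'a::euclidean_space \<Rightarrow> real"
  assumes "test_fun \<phi>" "c \<noteq> 0"
  shows "test_fun (\<lambda>x. \<phi> (t + c *\<^sub>R x))"
proof -
  have "Ck_fun k (\<lambda>x. \<phi> (t + c *\<^sub>R x))" for k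
    using Ck_affine[of k \<phi> 1 t c] assms(1) by (simp add: test_fun_def smooth_fun_def)
  moreover have "{x. \<phi> (t + c *\<^sub>R x) \<noteq> 0} = (\<lambda>y. (- (1/c) *\<^sub>R t) + (1/c) *\<^sub>R y) ` {y. \<phi> y \<noteq> 0}"
  proof safe
    fix x assume "\<phi> (t + c *\<^sub>R x) \<noteq> 0"
    then show "x \<in> (\<lambda>y. (- (1/c) *\<^sub>R t) + (1/c) *\<^sub>R y) ` {y. \<phi> y \<noteq> 0}"
      using assms(2) by (intro image_eqI[of _ _ "t + c *\<^sub>R x"]) (auto simp: algebra_simps)
  next
    fix y assume "\<phi> y \<noteq> 0" "\<phi> (t + c *\<^sub>R (- (1 / c) *\<^sub>R t + (1 / c) *\<^sub>R y)) = 0"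
    then show False using assms(2) by (simp add: algebra_simps)
  qed
  moreover have "compact (closure {y. \<phi> y \<noteq> 0})" using assms(1) by (simp add: test_fun_def)
  ultimately show ?thesis unfolding test_fun_def smooth_fun_def
    using compact_closure_image_aff[of "{y. \<phi> y \<noteq> 0}" "- (1/c) *\<^sub>R t" "1/c"] by metis
qed

lemma test_fun_diff: "test_fun \<phi> \<Longrightarrow> \<phi> differentiable (at x)"
  unfolding test_fun_def smooth_fun_def using Ck_fun.simps(2)[of 0 \<phi>] by metis

lemma grad_affine:
  fixes \<phi> :: "'a::euclidean_space \<Rightarrow> real"
  assumes "\<And>y. \<phi> differentiable (at y)"
  shows "grad (\<lambda>x. \<phi> (t + c *\<^sub>R x)) x = c *\<^sub>R grad \<phi> (t + c *\<^sub>R x)"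
  using pderiv_affine[of \<phi> t c x 1] assms unfolding grad_def
  by (simp add: scaleR_sum_right)

lemma integral_aff_div:
  fixes F :: "'a::euclidean_space \<Rightarrow> real"
  assumes "c > 0"
  shows "(\<integral>x. F (t + c *\<^sub>R x) \<partial>lborel) = (\<integral>x. F x \<partial>lborel) / c ^ DIM('a)"
  using lborel_integral_affine[of c F t] assms by simp

lemma weak_grad_affine:
  fixes m :: "'a::euclidean_space \<Rightarrow> real"
  assumes wg: "weak_grad m g" and c: "c > 0"
  shows "weak_grad (\<lambda>x. m (t + c *\<^sub>R x)) (\<lambda>x. c *\<^sub>R g (t + c *\<^sub>R x))"
  unfolding weak_grad_def
proof (intro allI impI ballI)
  fix \<phi> :: "'a \<Rightarrow> real" and i :: 'a
  assume \<phi>: "test_fun \<phi>" and i: "i \<in> Basis"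
  define \<psi> where "\<psi> = (\<lambda>y. \<phi> ((- (1/c) *\<^sub>R t) + (1/c) *\<^sub>R y))"
  have \<psi>t: "test_fun \<psi>" unfolding \<psi>_def using test_fun_affine[OF \<phi>, of "1/c" "- (1/c) *\<^sub>R t"] c by simp
  have \<phi>eq: "\<phi> = (\<lambda>x. 1 * \<psi> (t + c *\<^sub>R x))"
    using c by (auto simp: \<psi>_def algebra_simps)
  have pd: "pderiv_dir \<phi> i x = c * pderiv_dir \<psi> i (t + c *\<^sub>R x)" for x
    using pderiv_affine[of \<psi> t c x 1 i] test_fun_diff[OF \<psi>t] by (subst \<phi>eq) simp
  have "(\<integral>x. m (t + c *\<^sub>R x) * pderiv_dir \<phi> i x \<partial>lborel)
      = (\<integral>x. c * ((\<lambda>y. m y * pderiv_dir \<psi> i y) (t + c *\<^sub>R x)) \<partial>lborel)"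
    by (simp add: pd mult_ac)
  also have "\<dots> = c * ((\<integral>y. m y * pderiv_dir \<psi> i y \<partial>lborel) / c ^ DIM('a))"
    using integral_aff_div[OF c, of "\<lambda>y. m y * pderiv_dir \<psi> i y" t] by simp
  also have "\<dots> = c * (- (\<integral>y. (g y \<bullet> i) * \<psi> y \<partial>lborel) / c ^ DIM('a))"
    using wg \<psi>t i unfolding weak_grad_def by simp
  also have "\<dots> = - (\<integral>x. c * ((\<lambda>y. (g y \<bullet> i) * \<psi> y) (t + c *\<^sub>R x)) \<partial>lborel)"
    using integral_aff_div[OF c, of "\<lambda>y. (g y \<bullet> i) * \<psi> y" t] by simp
  also have "\<dots> = - (\<integral>x. ((c *\<^sub>R g (t + c *\<^sub>R x)) \<bullet> i) * \<phi> x \<partial>lborel)"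
    by (simp add: \<phi>eq mult_ac)
  finally show "(\<integral>x. m (t + c *\<^sub>R x) * pderiv_dir \<phi> i x \<partial>lborel) =
       - (\<integral>x. ((c *\<^sub>R g (t + c *\<^sub>R x)) \<bullet> i) * \<phi> x \<partial>lborel)" .
qed

lemma weak_pair_affine:
  fixes m :: "'a::euclidean_space \<Rightarrow> real"
  assumes wp: "weak_pair qh m w" and c: "c > 0"
  shows "weak_pair qh (\<lambda>x. m (t + c *\<^sub>R x)) (\<lambda>x. c *\<^sub>R w (t + c *\<^sub>R x))"
proof -
  from wp obtain g where m1: "Lp_fun 1 m" and mi: "integrable lborel m"
    and wm: "w \<in> borel_measurable lborel" and wi: "integrable lborel w"
    and wg: "weak_grad m g" and gq: "Lp_field qh g" and mq: "Lp_fun qh m"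
    and eq: "\<And>\<phi>. test_fun \<phi> \<Longrightarrow> (\<integral>x. g x \<bullet> grad \<phi> x \<partial>lborel) = (\<integral>x. w x \<bullet> grad \<phi> x \<partial>lborel)"
    unfolding weak_pair_def by blast
  have c0: "c \<noteq> 0" using c by simp
  have Lp: "Lp_fun p (\<lambda>x. m (t + c *\<^sub>R x))" if "Lp_fun p m" for p
    using that meas_aff lborel_integrable_affine[OF _ c0, of "\<lambda>x. \<bar>m x\<bar> powr p" t]
    unfolding Lp_fun_def by auto
  have gm: "g \<in> borel_measurable lborel" using gq unfolding Lp_field_def by simp
  have "Lp_field qh (\<lambda>x. c *\<^sub>R g (t + c *\<^sub>R x))"
  proof -
    have "integrable lborel (\<lambda>x. c powr qh * (norm (g (t + c *\<^sub>R x)) powr qh))"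
      using lborel_integrable_affine[OF _ c0, of "\<lambda>x. norm (g x) powr qh" t] gq
      unfolding Lp_field_def by auto
    moreover have "norm (c *\<^sub>R g y) powr qh = c powr qh * (norm (g y) powr qh)" for y
      using c by (simp add: powr_mult)
    ultimately show ?thesis unfolding Lp_field_def
      using meas_aff[OF gm] by (auto intro!: borel_measurable_scaleR)
  qed
  moreover have "weak_grad (\<lambda>x. m (t + c *\<^sub>R x)) (\<lambda>x. c *\<^sub>R g (t + c *\<^sub>R x))"
    by (rule weak_grad_affine[OF wg c])
  moreover have "(\<integral>x. (c *\<^sub>R g (t + c *\<^sub>R x)) \<bullet> grad \<phi> x \<partial>lborel)
      = (\<integral>x. (c *\<^sub>R w (t + c *\<^sub>R x)) \<bullet> grad \<phi> x \<partial>lborel)" if \<phi>: "test_fun \<phi>" for \<phi>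
  proof -
    define \<psi> where "\<psi> = (\<lambda>y. \<phi> ((- (1/c) *\<^sub>R t) + (1/c) *\<^sub>R y))"
    have \<psi>t: "test_fun \<psi>" unfolding \<psi>_def using test_fun_affine[OF \<phi>, of "1/c" "- (1/c) *\<^sub>R t"] c by simp
    have \<phi>eq: "\<phi> = (\<lambda>x. \<psi> (t + c *\<^sub>R x))"
      using c by (auto simp: \<psi>_def algebra_simps)
    have gr: "grad \<phi> x = c *\<^sub>R grad \<psi> (t + c *\<^sub>R x)" for x
      using grad_affine[of \<psi> t c x] test_fun_diff[OF \<psi>t] by (subst \<phi>eq) simp
    have gen: "(\<integral>x. (c *\<^sub>R h (t + c *\<^sub>R x)) \<bullet> grad \<phi> x \<partial>lborel)
        = c * c * ((\<integral>y. h y \<bullet> grad \<psi> y \<partial>lborel) / c ^ DIM('a))" for h :: "'a \<Rightarrow> 'a"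
    proof -
      have "(\<integral>x. (c *\<^sub>R h (t + c *\<^sub>R x)) \<bullet> grad \<phi> x \<partial>lborel)
          = (\<integral>x. c * c * ((\<lambda>y. h y \<bullet> grad \<psi> y) (t + c *\<^sub>R x)) \<partial>lborel)"
        by (simp add: gr mult_ac)
      also have "\<dots> = c * c * ((\<integral>y. h y \<bullet> grad \<psi> y \<partial>lborel) / c ^ DIM('a))"
        using integral_aff_div[OF c, of "\<lambda>y. h y \<bullet> grad \<psi> y" t] by simp
      finally show ?thesis .
    qed
    show ?thesis by (simp only: gen eq[OF \<psi>t])
  qed
  ultimately show ?thesis unfolding weak_pair_def
    using Lp[OF m1] Lp[OF mq] lborel_integrable_affine[OF mi c0]
      lborel_integrable_affine[OF wi c0, of t] meas_aff[OF wm]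
    by (auto intro!: integrable_scaleR_right borel_measurable_scaleR)
qed

lemma weak_pair_scale:
  fixes m :: "'a::euclidean_space \<Rightarrow> real"
  assumes wp: "weak_pair qh m w" and k: "k > 0"
  shows "weak_pair qh (\<lambda>x. k * m x) (\<lambda>x. k *\<^sub>R w x)"
proof -
  from wp obtain g where m1: "Lp_fun 1 m" and mi: "integrable lborel m"
    and wm: "w \<in> borel_measurable lborel" and wi: "integrable lborel w"
    and wg: "weak_grad m g" and gq: "Lp_field qh g" and mq: "Lp_fun qh m"
    and eq: "\<And>\<phi>. test_fun \<phi> \<Longrightarrow> (\<integral>x. g x \<bullet> grad \<phi> x \<partial>lborel) = (\<integral>x. w x \<bullet> grad \<phi> x \<partial>lborel)"
    unfolding weak_pair_def by blast
  have Lp: "Lp_fun p (\<lambda>x. k * m x)" if "Lp_fun p m" for p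
  proof -
    have "\<bar>k * m x\<bar> powr p = k powr p * \<bar>m x\<bar> powr p" for x
      using k by (simp add: abs_mult powr_mult)
    then show ?thesis using that unfolding Lp_fun_def by auto
  qed
  have "Lp_field qh (\<lambda>x. k *\<^sub>R g x)"
  proof -
    have "norm (k *\<^sub>R g x) powr qh = k powr qh * norm (g x) powr qh" for x
      using k by (simp add: powr_mult)
    then show ?thesis using gq unfolding Lp_field_def by (auto intro!: borel_measurable_scaleR)
  qed
  moreover have "weak_grad (\<lambda>x. k * m x) (\<lambda>x. k *\<^sub>R g x)"
    using wg unfolding weak_grad_def by (simp add: mult.assoc)
  moreover have "(\<integral>x. (k *\<^sub>R g x) \<bullet> grad \<phi> x \<partial>lborel) = (\<integral>x. (k *\<^sub>R w x) \<bullet> grad \<phi> x \<partial>lborel)"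
    if "test_fun \<phi>" for \<phi>
    using eq[OF that] by simp
  ultimately show ?thesis unfolding weak_pair_def
    using Lp[OF m1] Lp[OF mq] mi wi wm
    by (auto intro!: integrable_scaleR_right borel_measurable_scaleR)
qed

lemma nn_integral_aff_div:
  fixes f :: "'a::euclidean_space \<Rightarrow> ennreal"
  assumes f: "f \<in> borel_measurable lborel" and c: "c > 0"
  shows "(\<integral>\<^sup>+x. f (t + c *\<^sub>R x) \<partial>lborel) = ennreal (1 / c ^ DIM('a)) * (\<integral>\<^sup>+x. f x \<partial>lborel)"
proof -
  have fb: "f \<in> borel_measurable borel" using f by (simp add: measurable_lborel1)
  have "(\<integral>\<^sup>+x. f x \<partial>lborel) = ennreal (c ^ DIM('a)) * (\<integral>\<^sup>+x. f (t + c *\<^sub>R x) \<partial>lborel)"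
    using nn_integral_affine[OF fb, of c t] c by simp
  then have "ennreal (1 / c ^ DIM('a)) * (\<integral>\<^sup>+x. f x \<partial>lborel)
      = (ennreal (1 / c ^ DIM('a)) * ennreal (c ^ DIM('a))) * (\<integral>\<^sup>+x. f (t + c *\<^sub>R x) \<partial>lborel)"
    by (simp add: mult.assoc)
  also have "ennreal (1 / c ^ DIM('a)) * ennreal (c ^ DIM('a)) = 1"
    using c by (simp add: ennreal_mult'[symmetric])
  finally show ?thesis by simp
qed

lemma lag_scale:
  assumes k: "k > 0" and \<tau>: "\<tau> > 0"
  shows "lag_dens r (k * u) (k *\<^sub>R (\<tau> *\<^sub>R v)) = ennreal (k * \<tau> powr r) * lag_dens r u v"
proof (cases "u > 0")
  case True
  have "norm (k *\<^sub>R (\<tau> *\<^sub>R v)) powr r * (k * u) powr (1 - r)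
      = (k * \<tau> powr r) * (norm v powr r * u powr (1 - r))"
    using k \<tau> True by (simp add: powr_mult powr_diff field_simps)
  then show ?thesis using True k \<tau> by (simp add: lag_dens_def ennreal_mult'[symmetric])
next
  case False
  then have "\<not> k * u > 0" using k by (simp add: mult_pos_pos zero_less_mult_iff)
  then show ?thesis using False k \<tau> by (simp add: lag_dens_def ennreal_mult_top)
qed

lemma lag_meas:
  fixes m :: "'a::euclidean_space \<Rightarrow> real"
  assumes "m \<in> borel_measurable lborel" "w \<in> borel_measurable lborel"
  shows "(\<lambda>x. lag_dens r (m x) (w x)) \<in> borel_measurable lborel"
  unfolding lag_dens_def using assms by measurable

lemma ennr_assoc: "0 \<le> a \<Longrightarrow> 0 \<le> b \<Longrightarrow> ennreal a * (ennreal b * X) = ennreal (a*b) * X"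
  by (simp add: ennreal_mult mult.assoc)

lemma trial:
  fixes m0 :: "'a::euclidean_space \<Rightarrow> real" and V :: "'a \<Rightarrow> real" and t :: 'a and k \<tau> :: real
  assumes wp: "weak_pair qh m0 w0" and m0: "\<forall>x. m0 x \<ge> 0"
    and Vm: "V \<in> borel_measurable lborel" and V0: "\<forall>x. V x \<ge> 0"
    and k: "k > 0" and \<tau>: "\<tau> > 0"
  defines "m \<equiv> \<lambda>x. k * m0 (t + \<tau> *\<^sub>R x)"
    and "w \<equiv> \<lambda>x. k *\<^sub>R (\<tau> *\<^sub>R w0 (t + \<tau> *\<^sub>R x))"
  shows "weak_pair qh m w"
    and "(\<integral>x. m x \<partial>lborel) = k / \<tau> ^ DIM('a) * (\<integral>x. m0 x \<partial>lborel)"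
    and "kin r m w = ennreal (k * \<tau> powr r / \<tau> ^ DIM('a)) * kin r m0 w0"
    and "pot p m = ennreal (k powr p / \<tau> ^ DIM('a)) * pot p m0"
    and "(\<integral>\<^sup>+x. ennreal (V x * m x) \<partial>lborel)
         = ennreal (k / \<tau> ^ DIM('a)) * (\<integral>\<^sup>+z. ennreal (V ((1/\<tau>) *\<^sub>R (z - t)) * m0 z) \<partial>lborel)"
    and "\<forall>x. m x \<ge> 0"
proof -
  have m0m: "m0 \<in> borel_measurable lborel" and w0m: "w0 \<in> borel_measurable lborel"
    using wp unfolding weak_pair_def Lp_fun_def by auto
  show "weak_pair qh m w" unfolding m_def w_def
    by (rule weak_pair_scale[OF weak_pair_affine[OF wp \<tau>] k])
  show "(\<integral>x. m x \<partial>lborel) = k / \<tau> ^ DIM('a) * (\<integral>x. m0 x \<partial>lborel)"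
    unfolding m_def using integral_aff_div[OF \<tau>, of m0 t] by simp
  show "\<forall>x. m x \<ge> 0" unfolding m_def using m0 k by simp
  show "kin r m w = ennreal (k * \<tau> powr r / \<tau> ^ DIM('a)) * kin r m0 w0"
  proof -
    have "kin r m w = (\<integral>\<^sup>+x. ennreal (k * \<tau> powr r) * lag_dens r (m0 (t + \<tau> *\<^sub>R x)) (w0 (t + \<tau> *\<^sub>R x)) \<partial>lborel)"
      unfolding kin_def m_def w_def by (rule nn_integral_cong) (rule lag_scale[OF k \<tau>])
    also have "\<dots> = ennreal (k * \<tau> powr r) * (\<integral>\<^sup>+x. (\<lambda>z. lag_dens r (m0 z) (w0 z)) (t + \<tau> *\<^sub>R x) \<partial>lborel)"
      using lag_meas[OF m0m w0m] meas_aff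
      by (intro nn_integral_cmult) (auto simp: measurable_lborel1)
    also have "\<dots> = ennreal (k * \<tau> powr r) * (ennreal (1 / \<tau> ^ DIM('a)) * kin r m0 w0)"
      unfolding kin_def by (subst nn_integral_aff_div[OF lag_meas[OF m0m w0m] \<tau>]) simp
    also have "\<dots> = ennreal (k * \<tau> powr r / \<tau> ^ DIM('a)) * kin r m0 w0"
      using k \<tau> by (subst ennr_assoc) auto
    finally show ?thesis .
  qed
  show "pot p m = ennreal (k powr p / \<tau> ^ DIM('a)) * pot p m0"
  proof -
    have pm: "(\<lambda>z. ennreal (m0 z powr p)) \<in> borel_measurable lborel" using m0m by measurable
    have "pot p m = (\<integral>\<^sup>+x. ennreal (k powr p) * (\<lambda>z. ennreal (m0 z powr p)) (t + \<tau> *\<^sub>R x) \<partial>lborel)"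
      unfolding pot_def m_def using k m0 by (simp add: powr_mult ennreal_mult')
    also have "\<dots> = ennreal (k powr p) * (\<integral>\<^sup>+x. (\<lambda>z. ennreal (m0 z powr p)) (t + \<tau> *\<^sub>R x) \<partial>lborel)"
      using pm meas_aff by (intro nn_integral_cmult) (auto simp: measurable_lborel1)
    also have "\<dots> = ennreal (k powr p) * (ennreal (1 / \<tau> ^ DIM('a)) * pot p m0)"
      unfolding pot_def by (subst nn_integral_aff_div[OF pm \<tau>]) simp
    also have "\<dots> = ennreal (k powr p / \<tau> ^ DIM('a)) * pot p m0"
      using k \<tau> by (subst ennr_assoc) auto
    finally show ?thesis .
  qed
  show "(\<integral>\<^sup>+x. ennreal (V x * m x) \<partial>lborel)
         = ennreal (k / \<tau> ^ DIM('a)) * (\<integral>\<^sup>+z. ennreal (V ((1/\<tau>) *\<^sub>R (z - t)) * m0 z) \<partial>lborel)"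
  proof -
    define F where "F = (\<lambda>z. ennreal (V ((1/\<tau>) *\<^sub>R (z - t)) * m0 z))"
    have Fm: "F \<in> borel_measurable lborel" unfolding F_def
    proof -
      have "(\<lambda>z. V ((1/\<tau>) *\<^sub>R (z - t))) = (\<lambda>z. V ((- (1/\<tau>) *\<^sub>R t) + (1/\<tau>) *\<^sub>R z))"
        by (simp add: algebra_simps)
      then have "(\<lambda>z. V ((1/\<tau>) *\<^sub>R (z - t))) \<in> borel_measurable lborel"
        using meas_aff[OF Vm] by metis
      then show "(\<lambda>z. ennreal (V ((1/\<tau>) *\<^sub>R (z - t)) * m0 z)) \<in> borel_measurable lborel"
        using m0m by measurable
    qed
    have "(\<integral>\<^sup>+x. ennreal (V x * m x) \<partial>lborel) = (\<integral>\<^sup>+x. ennreal k * F (t + \<tau> *\<^sub>R x) \<partial>lborel)"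
      unfolding F_def m_def using \<tau> k V0 m0 by (simp add: ennreal_mult'[symmetric] mult_ac)
    also have "\<dots> = ennreal k * (\<integral>\<^sup>+x. F (t + \<tau> *\<^sub>R x) \<partial>lborel)"
      using Fm meas_aff by (intro nn_integral_cmult) (auto simp: measurable_lborel1)
    also have "\<dots> = ennreal k * (ennreal (1 / \<tau> ^ DIM('a)) * (\<integral>\<^sup>+z. F z \<partial>lborel))"
      by (subst nn_integral_aff_div[OF Fm \<tau>]) simp
    also have "\<dots> = ennreal (k / \<tau> ^ DIM('a)) * (\<integral>\<^sup>+z. F z \<partial>lborel)"
      using k \<tau> by (subst ennr_assoc) auto
    finally show ?thesis unfolding F_def .
  qed
qed

lemma exp_abs_1d_nn:
  assumes b: "\<beta> > 0"
  shows "(\<integral>\<^sup>+x. ennreal (exp (- \<beta> * \<bar>x::real\<bar>)) \<partial>lborel) < \<infinity>"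
proof -
  define f where "f = (\<lambda>x::real. ennreal (exp (- x)) * indicator {0..} x)"
  have fm: "f \<in> borel_measurable borel" unfolding f_def by measurable
  have f1: "(\<integral>\<^sup>+x. f x \<partial>lborel) = 1"
    using nn_intergal_power_times_exp_Ici[of 0] unfolding f_def by simp
  have p: "(\<integral>\<^sup>+x. f x \<partial>lborel) = ennreal \<beta> * (\<integral>\<^sup>+x. f (0 + \<beta> * x) \<partial>lborel)"
    using nn_integral_real_affine[OF fm, of \<beta> 0] b by simp
  have n: "(\<integral>\<^sup>+x. f x \<partial>lborel) = ennreal \<beta> * (\<integral>\<^sup>+x. f (0 + (-\<beta>) * x) \<partial>lborel)"
    using nn_integral_real_affine[OF fm, of "-\<beta>" 0] b by simp
  have P: "(\<integral>\<^sup>+x. f (\<beta> * x) \<partial>lborel) < \<infinity>"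
  proof (rule ccontr)
    assume "\<not> ?thesis" then have "(\<integral>\<^sup>+x. f (\<beta> * x) \<partial>lborel) = \<infinity>" by (simp add: less_top[symmetric])
    then show False using p f1 b by (simp add: ennreal_mult_top)
  qed
  have N: "(\<integral>\<^sup>+x. f (-\<beta> * x) \<partial>lborel) < \<infinity>"
  proof (rule ccontr)
    assume "\<not> ?thesis" then have "(\<integral>\<^sup>+x. f (-\<beta> * x) \<partial>lborel) = \<infinity>" by (simp add: less_top[symmetric])
    then show False using n f1 b by (simp add: ennreal_mult_top)
  qed
  have le: "ennreal (exp (- \<beta> * \<bar>x\<bar>)) \<le> f (\<beta> * x) + f (-\<beta> * x)" for x
    using b by (cases "x \<ge> 0") (auto simp: f_def indicator_def zero_le_mult_iff mult_le_0_iff)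
  have "(\<integral>\<^sup>+x. ennreal (exp (- \<beta> * \<bar>x::real\<bar>)) \<partial>lborel) \<le> (\<integral>\<^sup>+x. f (\<beta> * x) + f (-\<beta> * x) \<partial>lborel)"
    by (intro nn_integral_mono le)
  also have "\<dots> = (\<integral>\<^sup>+x. f (\<beta> * x) \<partial>lborel) + (\<integral>\<^sup>+x. f (-\<beta> * x) \<partial>lborel)"
    using fm by (intro nn_integral_add) auto
  also have "\<dots> < \<infinity>" using P N by (simp add: ennreal_add_less_top)
  finally show ?thesis .
qed

lemma exp_norm_integrable:
  assumes b: "\<gamma> > 0"
  shows "integrable lborel (\<lambda>x::'a::euclidean_space. exp (- \<gamma> * norm x))"
proof -
  define n where "n = real DIM('a)"
  have n0: "n > 0" unfolding n_def by simp
  define \<beta> where "\<beta> = \<gamma> / n"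
  have \<beta>0: "\<beta> > 0" unfolding \<beta>_def using b n0 by simp
  have le: "ennreal (exp (- \<gamma> * norm x)) \<le> (\<Prod>b\<in>Basis. ennreal (exp (- \<beta> * \<bar>x \<bullet> b\<bar>)))" for x :: 'a
  proof -
    have "(\<Sum>b\<in>Basis. \<bar>x \<bullet> b\<bar>) \<le> (\<Sum>b\<in>(Basis::'a set). norm x)"
      by (intro sum_mono) (simp add: Basis_le_norm)
    then have "(\<Sum>b\<in>Basis. \<bar>x \<bullet> b\<bar>) \<le> n * norm x" by (simp add: n_def)
    then have "\<beta> * (\<Sum>b\<in>Basis. \<bar>x \<bullet> b\<bar>) \<le> \<gamma> * norm x"
      using \<beta>0 n0 unfolding \<beta>_def by (simp add: field_simps)
    then have "exp (- \<gamma> * norm x) \<le> exp (- \<beta> * (\<Sum>b\<in>Basis. \<bar>x \<bullet> b\<bar>))" by simp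
    also have "\<dots> = (\<Prod>b\<in>Basis. exp (- \<beta> * \<bar>x \<bullet> b\<bar>))"
      by (simp add: sum_distrib_left exp_sum)
    finally show ?thesis by (subst prod_ennreal) (auto intro: ennreal_leI)
  qed
  have "(\<integral>\<^sup>+x. ennreal (exp (- \<gamma> * norm (x::'a))) \<partial>lborel)
      \<le> (\<integral>\<^sup>+x. (\<Prod>b\<in>Basis. ennreal (exp (- \<beta> * \<bar>(x::'a) \<bullet> b\<bar>))) \<partial>lborel)"
    apply (rule nn_integral_mono)
    using le by simp
  also have "\<dots> = (\<Prod>b\<in>(Basis::'a set). (\<integral>\<^sup>+x. ennreal (exp (- \<beta> * \<bar>x\<bar>)) \<partial>lborel))"
    by (rule nn_integral_lborel_prod[where f="\<lambda>b x. ennreal (exp (- \<beta> * \<bar>x\<bar>))"]) auto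
  also have "\<dots> < \<infinity>" using exp_abs_1d_nn[OF \<beta>0]
    by (simp add: less_top[symmetric] power_eq_top_ennreal)
  finally show ?thesis
    by (intro integrableI_nonneg) (auto simp: measurable_lborel1)
qed

lemma powr_exp_bound:
  fixes s \<beta> :: real
  assumes s: "s \<ge> 0" and b: "\<beta> > 0"
  shows "\<exists>K>0. \<forall>u\<ge>0. u powr s \<le> K * exp (\<beta> * u)"
proof (cases "s = 0")
  case True
  have "u powr s \<le> 1 * exp (\<beta> * u)" if "u \<ge> 0" for u
    using True b that by (auto simp: zero_le_mult_iff)
  then show ?thesis using zero_less_one by blast
next
  case False
  then have s0: "s > 0" using s by simp
  define e where "e = \<beta> / s"
  have e0: "e > 0" unfolding e_def using s0 b by simp
  define K where "K = exp (s * (- 1 - ln e))"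
  have "u powr s \<le> K * exp (\<beta> * u)" if u: "u \<ge> 0" for u
  proof (cases "u = 0")
    case True then show ?thesis using s0 by (simp add: K_def)
  next
    case False
    then have u0: "u > 0" using u by simp
    have "ln u = ln (e * u) - ln e" using u0 e0 by (simp add: ln_mult)
    also have "\<dots> \<le> e * u - 1 - ln e" using ln_le_minus_one[of "e*u"] u0 e0 by simp
    finally have "s * ln u \<le> s * (e * u - 1 - ln e)" using s0 by simp
    also have "\<dots> = \<beta> * u + s * (- 1 - ln e)" unfolding e_def using s0 by (simp add: field_simps)
    finally have "exp (s * ln u) \<le> exp (\<beta> * u + s * (- 1 - ln e))" by simp
    then show ?thesis using u0 by (simp add: powr_def exp_add K_def mult.commute)
  qed
  then show ?thesis by (intro exI[of _ K]) (auto simp: K_def)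
qed

locale Vsetup =
  fixes V m0 :: "'a::euclidean_space \<Rightarrow> real" and P0 :: 'a
    and a0 q d K B C2 \<delta> C \<delta>1 R :: real
  assumes Vm: "V \<in> borel_measurable lborel" and V0: "\<forall>x. V x \<ge> 0"
    and m0m: "m0 \<in> borel_measurable lborel" and m00: "\<forall>x. m0 x \<ge> 0"
    and q: "q > 0" and d: "d > 0" and K: "K \<ge> 0" and a0: "a0 \<ge> 0"
    and VP: "V P0 = 0"
    and asym: "\<forall>x. 0 < norm (x - P0) \<and> norm (x - P0) \<le> d \<longrightarrow>
                  \<bar>V x - a0 * norm (x - P0) powr q\<bar> \<le> K * norm (x - P0) powr (q + 1)"
    and bnd: "\<forall>x. norm x \<le> R \<longrightarrow> V x \<le> B"
    and grow: "\<forall>x. norm x \<ge> R \<longrightarrow> V x \<le> C2 * exp (\<delta> * norm x)"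
    and C2: "C2 \<ge> 0" and \<delta>: "\<delta> > 0"
    and decay: "\<forall>x. m0 x \<le> C * exp (- \<delta>1 * norm x)" and \<delta>1: "\<delta>1 > 0"
begin

definition "L = a0 + K + (\<bar>B\<bar> + C2 * exp (\<delta> * norm P0)) / d powr q"

lemma L0: "L \<ge> 0" unfolding L_def using a0 K C2 d by (auto intro!: add_nonneg_nonneg divide_nonneg_pos)

lemma Vbound:
  assumes \<tau>1: "\<tau> \<ge> 1" and \<tau>\<delta>: "\<delta> / \<tau> \<le> \<delta>1 / 2"
  shows "\<tau> powr q * V (P0 + (1/\<tau>) *\<^sub>R u) \<le> L * (norm u powr q + norm u powr (q + 1)) * exp ((\<delta>1 / 2) * norm u)"
proof -
  have \<tau>0: "\<tau> > 0" using \<tau>1 by simp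
  define x where "x = P0 + (1/\<tau>) *\<^sub>R u"
  define \<rho> where "\<rho> = norm u / \<tau>"
  have xP: "norm (x - P0) = \<rho>" unfolding x_def \<rho>_def using \<tau>0 by simp
  have E1: "exp ((\<delta>1 / 2) * norm u) \<ge> 1" using \<delta>1 by simp
  have RHS0: "0 \<le> L * (norm u powr q + norm u powr (q + 1))" using L0 by simp
  have RHS1: "L * (norm u powr q + norm u powr (q + 1)) \<le> L * (norm u powr q + norm u powr (q + 1)) * exp ((\<delta>1 / 2) * norm u)"
    using RHS0 E1 by (simp add: mult_le_cancel_left1)
  show ?thesis
  proof (cases "u = 0")
    case True then show ?thesis using VP L0 by simp
  next
    case False
    then have \<rho>0: "\<rho> > 0" unfolding \<rho>_def using \<tau>0 by simp
    show ?thesis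
    proof (cases "\<rho> \<le> d")
      case True
      have "V x \<le> a0 * \<rho> powr q + K * \<rho> powr (q + 1)"
        using asym[rule_format, of x] xP \<rho>0 True by auto
      then have "\<tau> powr q * V x \<le> \<tau> powr q * (a0 * \<rho> powr q + K * \<rho> powr (q + 1))"
        using \<tau>0 by (simp add: mult_left_mono)
      also have "\<dots> = a0 * norm u powr q + K * norm u powr (q + 1) / \<tau>"
        unfolding \<rho>_def using \<tau>0 q
        by (simp add: powr_divide powr_add field_simps)
      also have "\<dots> \<le> a0 * norm u powr q + K * norm u powr (q + 1)"
      proof -
        have N0: "0 \<le> K * norm u powr (q + 1)" using K by simp
        have "K * norm u powr (q + 1) / \<tau> \<le> K * norm u powr (q + 1) / 1"
          using divide_left_mono[OF \<tau>1 N0] \<tau>1 by simp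
        then show ?thesis by simp
      qed
      also have "\<dots> \<le> L * (norm u powr q + norm u powr (q + 1))"
      proof -
        have "a0 \<le> L" "K \<le> L" unfolding L_def using a0 K C2 d
          by (auto intro!: add_nonneg_nonneg divide_nonneg_pos)
        then show ?thesis by (simp add: distrib_left add_mono mult_right_mono)
      qed
      finally show ?thesis using RHS1 unfolding x_def by simp
    next
      case False
      then have \<tau>u: "\<tau> < norm u / d" using d \<tau>0 unfolding \<rho>_def by (simp add: field_simps)
      have tq: "\<tau> powr q \<le> norm u powr q / d powr q"
        using \<tau>u \<tau>0 q d by (simp add: powr_divide[symmetric] powr_mono2)
      have nx: "norm x \<le> norm P0 + norm u / \<tau>"
        unfolding x_def using norm_triangle_ineq[of P0 "(1/\<tau>) *\<^sub>R u"] \<tau>0 by simp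
      have eu: "exp (\<delta> * (norm u / \<tau>)) \<le> exp ((\<delta>1 / 2) * norm u)"
      proof -
        have "\<delta> / \<tau> * norm u \<le> \<delta>1 / 2 * norm u" using \<tau>\<delta> by (rule mult_right_mono) simp
        then show ?thesis by simp
      qed
      have "V x \<le> \<bar>B\<bar> + C2 * exp (\<delta> * norm x)"
      proof (cases "norm x \<le> R")
        case True
        have "V x \<le> \<bar>B\<bar>" using bnd True by (meson abs_ge_self order.trans)
        moreover have "0 \<le> C2 * exp (\<delta> * norm x)" using C2 by simp
        ultimately show ?thesis by linarith
      next
        case False
        then show ?thesis using grow by (smt (verit))
      qed
      also have "\<dots> \<le> \<bar>B\<bar> + C2 * (exp (\<delta> * norm P0) * exp (\<delta> * (norm u / \<tau>)))"
      proof -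
        have "\<delta> * norm x \<le> \<delta> * (norm P0 + norm u / \<tau>)" using nx \<delta> by (simp add: mult_left_mono)
        then have "exp (\<delta> * norm x) \<le> exp (\<delta> * norm P0) * exp (\<delta> * (norm u / \<tau>))"
          by (simp add: exp_add[symmetric] distrib_left)
        then show ?thesis using C2 by (simp add: mult_left_mono)
      qed
      also have "\<dots> \<le> (\<bar>B\<bar> + C2 * exp (\<delta> * norm P0)) * exp ((\<delta>1 / 2) * norm u)"
      proof -
        have "\<bar>B\<bar> \<le> \<bar>B\<bar> * exp ((\<delta>1 / 2) * norm u)" using E1 by (simp add: mult_le_cancel_left1)
        moreover have "C2 * (exp (\<delta> * norm P0) * exp (\<delta> * (norm u / \<tau>))) \<le> C2 * exp (\<delta> * norm P0) * exp ((\<delta>1 / 2) * norm u)"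
          using eu C2 by (simp add: mult.assoc mult_left_mono)
        ultimately show ?thesis by (simp add: distrib_right)
      qed
      finally have Vx: "V x \<le> (\<bar>B\<bar> + C2 * exp (\<delta> * norm P0)) * exp ((\<delta>1 / 2) * norm u)" .
      have "\<tau> powr q * V x \<le> (norm u powr q / d powr q) * ((\<bar>B\<bar> + C2 * exp (\<delta> * norm P0)) * exp ((\<delta>1 / 2) * norm u))"
        using tq Vx V0 by (intro mult_mono) auto
      also have "\<dots> = ((\<bar>B\<bar> + C2 * exp (\<delta> * norm P0)) / d powr q) * norm u powr q * exp ((\<delta>1 / 2) * norm u)"
        by simp
      also have "\<dots> \<le> L * (norm u powr q + norm u powr (q + 1)) * exp ((\<delta>1 / 2) * norm u)"
      proof -
        have "(\<bar>B\<bar> + C2 * exp (\<delta> * norm P0)) / d powr q \<le> L" unfolding L_def using a0 K by simp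
        moreover have "(\<bar>B\<bar> + C2 * exp (\<delta> * norm P0)) / d powr q \<ge> 0" using C2 d by simp
        ultimately have "((\<bar>B\<bar> + C2 * exp (\<delta> * norm P0)) / d powr q) * norm u powr q \<le> L * (norm u powr q + norm u powr (q + 1))"
          by (intro mult_mono) auto
        then show ?thesis by (intro mult_right_mono) auto
      qed
      finally show ?thesis unfolding x_def .
    qed
  qed
qed

lemma Vlim:
  "((\<lambda>\<tau>. \<tau> powr q * V (P0 + (1/\<tau>) *\<^sub>R u)) \<longlongrightarrow> a0 * norm u powr q) at_top"
proof (cases "u = 0")
  case True
  then show ?thesis using VP q by simp
next
  case False
  have ev: "\<forall>\<^sub>F \<tau> in at_top. norm (\<tau> powr q * V (P0 + (1/\<tau>) *\<^sub>R u) - a0 * norm u powr q) \<le> K * norm u powr (q + 1) / \<tau>"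
    using eventually_ge_at_top[of "max 1 (norm u / d)"]
  proof eventually_elim
    case (elim \<tau>)
    then have \<tau>0: "\<tau> > 0" by simp
    define \<rho> where "\<rho> = norm u / \<tau>"
    have \<rho>0: "\<rho> > 0" unfolding \<rho>_def using \<tau>0 False by simp
    have \<rho>d: "\<rho> \<le> d" unfolding \<rho>_def using elim \<tau>0 d by (simp add: field_simps)
    have xP: "norm (P0 + (1/\<tau>) *\<^sub>R u - P0) = \<rho>" unfolding \<rho>_def using \<tau>0 by simp
    have A: "\<bar>V (P0 + (1/\<tau>) *\<^sub>R u) - a0 * \<rho> powr q\<bar> \<le> K * \<rho> powr (q + 1)"
      using asym[rule_format, of "P0 + (1/\<tau>) *\<^sub>R u"] xP \<rho>0 \<rho>d by auto
    have "norm (\<tau> powr q * V (P0 + (1/\<tau>) *\<^sub>R u) - a0 * norm u powr q)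
        = \<tau> powr q * \<bar>V (P0 + (1/\<tau>) *\<^sub>R u) - a0 * \<rho> powr q\<bar>"
    proof -
      have "a0 * norm u powr q = \<tau> powr q * (a0 * \<rho> powr q)"
        unfolding \<rho>_def using \<tau>0 by (simp add: powr_divide)
      then have "\<tau> powr q * V (P0 + (1/\<tau>) *\<^sub>R u) - a0 * norm u powr q
          = \<tau> powr q * (V (P0 + (1/\<tau>) *\<^sub>R u) - a0 * \<rho> powr q)"
        by (simp add: right_diff_distrib)
      then show ?thesis by (simp add: abs_mult)
    qed
    also have "\<dots> \<le> \<tau> powr q * (K * \<rho> powr (q + 1))"
      using A by (simp add: mult_left_mono)
    also have "\<dots> = K * norm u powr (q + 1) / \<tau>"
      unfolding \<rho>_def using \<tau>0 by (simp add: powr_divide powr_add field_simps)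
    finally show ?case .
  qed
  have "((\<lambda>\<tau>. K * norm u powr (q + 1) / \<tau>) \<longlongrightarrow> 0) at_top"
    by (intro tendsto_divide_0[OF tendsto_const] filterlim_at_top_imp_at_infinity[OF filterlim_ident])
  from Lim_null_comparison[OF ev this]
  have "((\<lambda>\<tau>. \<tau> powr q * V (P0 + (1/\<tau>) *\<^sub>R u) - a0 * norm u powr q) \<longlongrightarrow> 0) at_top" .
  then show ?thesis by (simp add: LIM_zero_iff)
qed

end

context Vsetup begin

lemma C0: "C \<ge> 0"
  using decay[rule_format, of 0] m00 by (smt (verit) exp_gt_zero mult_nonneg_nonneg zero_le_mult_iff)

lemma Vaff_meas: "(\<lambda>z. V (P0 + (1/\<tau>) *\<^sub>R (z + y))) \<in> borel_measurable lborel"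
proof -
  have "(\<lambda>z. V (P0 + (1/\<tau>) *\<^sub>R (z + y))) = (\<lambda>z. V ((P0 + (1/\<tau>) *\<^sub>R y) + (1/\<tau>) *\<^sub>R z))"
    by (simp add: algebra_simps)
  then show ?thesis using meas_aff[OF Vm] by metis
qed

lemma dom_bound:
  assumes \<tau>: "\<tau> \<ge> max 1 (2 * \<delta> / \<delta>1)"
    and K3: "\<forall>u\<ge>0. u powr q + u powr (q + 1) \<le> K3 * exp (\<delta>1 / 4 * u)"
  shows "norm (\<tau> powr q * V (P0 + (1/\<tau>) *\<^sub>R (z + y)) * m0 z)
     \<le> L * K3 * C * exp (3 * \<delta>1 / 4 * norm y) * exp (- (\<delta>1 / 4) * norm z)"
proof -
  have \<tau>1: "\<tau> \<ge> 1" using \<tau> by simp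
  have \<tau>0: "\<tau> > 0" using \<tau>1 by simp
  have "2 * \<delta> / \<delta>1 \<le> \<tau>" using \<tau> by simp
  then have \<tau>\<delta>: "\<delta> / \<tau> \<le> \<delta>1 / 2" using \<tau>0 \<delta>1 by (simp add: field_simps)
  define u where "u = z + y"
  define \<rho> where "\<rho> = norm z + norm y"
  have u\<rho>: "norm u \<le> \<rho>" unfolding u_def \<rho>_def by (rule norm_triangle_ineq)
  have nn: "0 \<le> \<tau> powr q * V (P0 + (1/\<tau>) *\<^sub>R u) * m0 z" using V0 m00 by simp
  have "\<tau> powr q * V (P0 + (1/\<tau>) *\<^sub>R u) * m0 z
      \<le> (L * (norm u powr q + norm u powr (q + 1)) * exp ((\<delta>1 / 2) * norm u)) * (C * exp (- \<delta>1 * norm z))"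
  proof -
    have b0: "0 \<le> L * (norm u powr q + norm u powr (q + 1)) * exp ((\<delta>1 / 2) * norm u)" using L0 by simp
    show ?thesis by (rule mult_mono[OF Vbound[OF \<tau>1 \<tau>\<delta>, of u] decay[rule_format, of z] b0 m00[rule_format]])
  qed
  also have "\<dots> \<le> (L * (\<rho> powr q + \<rho> powr (q + 1)) * exp ((\<delta>1 / 2) * \<rho>)) * (C * exp (- \<delta>1 * norm z))"
  proof -
    have "norm u powr q \<le> \<rho> powr q" "norm u powr (q+1) \<le> \<rho> powr (q+1)"
      using u\<rho> q by (auto intro!: powr_mono2)
    moreover have "exp ((\<delta>1 / 2) * norm u) \<le> exp ((\<delta>1 / 2) * \<rho>)" using u\<rho> \<delta>1 by simp
    ultimately show ?thesis using L0 C0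
      by (intro mult_right_mono mult_mono mult_left_mono add_mono) auto
  qed
  also have "\<dots> \<le> (L * (K3 * exp (\<delta>1 / 4 * \<rho>)) * exp ((\<delta>1 / 2) * \<rho>)) * (C * exp (- \<delta>1 * norm z))"
    using K3[rule_format, of \<rho>] L0 C0 unfolding \<rho>_def
    by (intro mult_right_mono mult_left_mono) auto
  also have "\<dots> = L * K3 * C * exp (3 * \<delta>1 / 4 * norm y) * exp (- (\<delta>1 / 4) * norm z)"
  proof -
    have "exp (\<delta>1 / 4 * \<rho>) * exp ((\<delta>1 / 2) * \<rho>) * exp (- \<delta>1 * norm z)
        = exp (3 * \<delta>1 / 4 * norm y) * exp (- (\<delta>1 / 4) * norm z)"
      unfolding \<rho>_def exp_add[symmetric] by (simp add: field_simps)
    then show ?thesis by (simp add: mult_ac)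
  qed
  finally show ?thesis using nn unfolding u_def by simp
qed

lemma Jconv:
  shows "((\<lambda>\<tau>. \<integral>z. \<tau> powr q * V (P0 + (1/\<tau>) *\<^sub>R (z + y)) * m0 z \<partial>lborel)
          \<longlongrightarrow> (\<integral>z. a0 * norm (z + y) powr q * m0 z \<partial>lborel)) at_top"
    and "\<forall>\<^sub>F \<tau> in at_top. integrable lborel (\<lambda>z. V (P0 + (1/\<tau>) *\<^sub>R (z + y)) * m0 z)"
    and "integrable lborel (\<lambda>z. a0 * norm (z + y) powr q * m0 z)"
proof -
  obtain K1 where K1: "K1 > 0" "\<forall>u\<ge>0. u powr q \<le> K1 * exp (\<delta>1 / 4 * u)"
    using powr_exp_bound[of q "\<delta>1/4"] q \<delta>1 by auto
  obtain K2 where K2: "K2 > 0" "\<forall>u\<ge>0. u powr (q+1) \<le> K2 * exp (\<delta>1 / 4 * u)"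
    using powr_exp_bound[of "q+1" "\<delta>1/4"] q \<delta>1 by auto
  define K3 where "K3 = K1 + K2"
  have K3: "\<forall>u\<ge>0. u powr q + u powr (q + 1) \<le> K3 * exp (\<delta>1 / 4 * u)"
  proof (intro allI impI)
    fix u :: real assume u: "u \<ge> 0"
    have "u powr q \<le> K1 * exp (\<delta>1 / 4 * u)" "u powr (q+1) \<le> K2 * exp (\<delta>1 / 4 * u)"
      using K1(2) K2(2) u by auto
    moreover have "K3 * exp (\<delta>1 / 4 * u) = K1 * exp (\<delta>1 / 4 * u) + K2 * exp (\<delta>1 / 4 * u)"
      unfolding K3_def by (simp add: distrib_right)
    ultimately show "u powr q + u powr (q + 1) \<le> K3 * exp (\<delta>1 / 4 * u)" by linarith
  qed
  define G where "G = (\<lambda>z::'a. L * K3 * C * exp (3 * \<delta>1 / 4 * norm y) * exp (- (\<delta>1 / 4) * norm z))"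
  have "integrable lborel (\<lambda>x::'a. exp (- (\<delta>1/4) * norm x))" by (rule exp_norm_integrable) (use \<delta>1 in simp)
  then have Gi: "integrable lborel G" unfolding G_def by simp
  have sm: "(\<lambda>z. \<tau> powr q * V (P0 + (1/\<tau>) *\<^sub>R (z + y)) * m0 z) \<in> borel_measurable lborel" for \<tau>
    using Vaff_meas[of \<tau>] m0m by measurable
  have bnd': "\<forall>\<^sub>F \<tau> in at_top. \<forall>z. norm (\<tau> powr q * V (P0 + (1/\<tau>) *\<^sub>R (z + y)) * m0 z) \<le> G z"
    using eventually_ge_at_top[of "max 1 (2 * \<delta> / \<delta>1)"]
  proof eventually_elim
    case (elim \<tau>)
    show ?case unfolding G_def using dom_bound[OF elim K3] by blast
  qed
  have fm: "(\<lambda>z. a0 * norm (z + y) powr q * m0 z) \<in> borel_measurable lborel"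
    using m0m by measurable
  have lim: "AE z in lborel. ((\<lambda>\<tau>. \<tau> powr q * V (P0 + (1/\<tau>) *\<^sub>R (z + y)) * m0 z) \<longlongrightarrow> a0 * norm (z + y) powr q * m0 z) at_top"
    by (intro AE_I2 tendsto_mult_right Vlim)
  have bAE: "\<forall>\<^sub>F \<tau> in at_top. AE z in lborel. norm (\<tau> powr q * V (P0 + (1/\<tau>) *\<^sub>R (z + y)) * m0 z) \<le> G z"
    using bnd' by eventually_elim auto
  show "((\<lambda>\<tau>. \<integral>z. \<tau> powr q * V (P0 + (1/\<tau>) *\<^sub>R (z + y)) * m0 z \<partial>lborel)
          \<longlongrightarrow> (\<integral>z. a0 * norm (z + y) powr q * m0 z \<partial>lborel)) at_top"
    by (rule integral_dominated_convergence_at_top[OF fm sm Gi lim bAE])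
  show "integrable lborel (\<lambda>z. a0 * norm (z + y) powr q * m0 z)"
    by (rule integrable_dominated_convergence_at_top[OF fm sm Gi lim bAE])
  show "\<forall>\<^sub>F \<tau> in at_top. integrable lborel (\<lambda>z. V (P0 + (1/\<tau>) *\<^sub>R (z + y)) * m0 z)"
    using bnd' eventually_ge_at_top[of 1]
  proof eventually_elim
    case (elim \<tau>)
    have "integrable lborel (\<lambda>z. \<tau> powr q * V (P0 + (1/\<tau>) *\<^sub>R (z + y)) * m0 z)"
    proof (rule Bochner_Integration.integrable_bound[OF Gi sm])
      show "AE z in lborel. norm (\<tau> powr q * V (P0 + (1/\<tau>) *\<^sub>R (z + y)) * m0 z) \<le> norm (G z)"
        by (intro AE_I2) (metis elim(1) order_trans abs_ge_self real_norm_def)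
    qed
    then have i2: "integrable lborel (\<lambda>z. (1 / \<tau> powr q) * (\<tau> powr q * V (P0 + (1/\<tau>) *\<^sub>R (z + y)) * m0 z))"
      by (rule integrable_mult_right)
    have "(\<lambda>z. V (P0 + (1/\<tau>) *\<^sub>R (z + y)) * m0 z) = (\<lambda>z. (1 / \<tau> powr q) * (\<tau> powr q * V (P0 + (1/\<tau>) *\<^sub>R (z + y)) * m0 z))"
      using elim(2) by (auto simp: fun_eq_iff)
    then show ?case using i2 by simp
  qed
qed

end

lemma Hpos:
  fixes m0 :: "'a::euclidean_space \<Rightarrow> real"
  assumes m00: "\<forall>x. m0 x \<ge> 0" and mi: "integrable lborel m0"
    and Ms: "(\<integral>x. m0 x \<partial>lborel) > 0" and Cb: "\<forall>x. m0 x \<le> Cb"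
    and a0: "a0 > 0" and q: "q > 0"
    and Hi: "\<forall>y. integrable lborel (\<lambda>x. a0 * norm (x + y) powr q * m0 x)"
  shows "\<exists>c0>0. \<forall>y. (\<integral>x. a0 * norm (x + y) powr q * m0 x \<partial>lborel) \<ge> c0"
proof -
  define M where "M = (\<integral>x. m0 x \<partial>lborel)"
  have M0: "M > 0" using Ms unfolding M_def .
  have Cb0: "Cb \<ge> 0" using Cb m00 by (meson order.trans)
  define h where "h = min 1 (M / (2 * (Cb + 1)))"
  have h0: "h > 0" unfolding h_def using M0 Cb0 by simp
  have h1: "h \<le> 1" unfolding h_def by simp
  have hn: "h ^ DIM('a) \<le> h" using h0 h1 by (simp add: power_le_one_iff power_decreasing[of 1 "DIM('a)" h, simplified] DIM_positive)
  have hC: "Cb * h ^ DIM('a) \<le> M / 2"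
  proof -
    have "Cb * h ^ DIM('a) \<le> (Cb + 1) * h" using hn Cb0 h0
      by (intro mult_mono) auto
    also have "\<dots> \<le> (Cb + 1) * (M / (2 * (Cb + 1)))" unfolding h_def using Cb0
      by (intro mult_left_mono) auto
    also have "\<dots> = M / 2" using Cb0 by (simp add: field_simps)
    finally show ?thesis .
  qed
  define \<rho> where "\<rho> = h / 2"
  have \<rho>0: "\<rho> > 0" unfolding \<rho>_def using h0 by simp
  define c0 where "c0 = a0 * \<rho> powr q * (M / 2)"
  have "(\<integral>x. a0 * norm (x + y) powr q * m0 x \<partial>lborel) \<ge> c0" for y
  proof -
    define l where "l = - y - \<rho> *\<^sub>R One"
    define u where "u = - y + \<rho> *\<^sub>R One"
    define Bx where "Bx = cbox l u"
    have lu: "\<forall>b\<in>Basis. l \<bullet> b \<le> u \<bullet> b" unfolding l_def u_def using \<rho>0 by (auto simp: inner_diff_left inner_add_left)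
    have mB: "measure lborel Bx = h ^ DIM('a)"
      unfolding Bx_def measure_lborel_cbox_eq using lu
      by (simp add: l_def u_def \<rho>_def inner_diff_left inner_add_left)
    have Bs: "Bx \<in> sets lborel" unfolding Bx_def by simp
    have fin: "emeasure lborel Bx < \<infinity>" unfolding Bx_def by (rule emeasure_lborel_cbox_finite)
    have iB: "integrable lborel (\<lambda>x. indicator Bx x *\<^sub>R m0 x)"
      by (rule integrable_mult_indicator[OF Bs mi])
    have iC: "integrable lborel (\<lambda>x. indicator Bx x *\<^sub>R Cb)"
      using integrable_real_indicator[OF Bs fin] by simp
    have "(\<integral>x. indicator Bx x *\<^sub>R m0 x \<partial>lborel) \<le> (\<integral>x. indicator Bx x *\<^sub>R Cb \<partial>lborel)"
      using iB iC Cb by (intro integral_mono) (auto simp: indicator_def)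
    also have "\<dots> = Cb * h ^ DIM('a)" using mB Bs fin
      by (simp add: measure_def[symmetric] mult.commute)
    finally have IB: "(\<integral>x. indicator Bx x *\<^sub>R m0 x \<partial>lborel) \<le> M / 2" using hC by simp
    have pw: "a0 * \<rho> powr q * (m0 x - indicator Bx x *\<^sub>R m0 x) \<le> a0 * norm (x + y) powr q * m0 x" for x
    proof (cases "x \<in> Bx")
      case True then show ?thesis using m00 a0 by simp
    next
      case False
      then obtain b where b: "b \<in> Basis" "x \<bullet> b < l \<bullet> b \<or> u \<bullet> b < x \<bullet> b"
        unfolding Bx_def mem_box by (auto simp: not_le)
      then have "\<rho> < \<bar>(x + y) \<bullet> b\<bar>" unfolding l_def u_def
        by (auto simp: inner_diff_left inner_add_left)
      also have "\<dots> \<le> norm (x + y)" using b(1) by (rule Basis_le_norm)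
      finally have "\<rho> powr q \<le> norm (x + y) powr q" using \<rho>0 q by (intro powr_mono2) auto
      then show ?thesis using False m00 a0 by (simp add: mult_right_mono)
    qed
    have "c0 \<le> a0 * \<rho> powr q * (M - (\<integral>x. indicator Bx x *\<^sub>R m0 x \<partial>lborel))"
      unfolding c0_def using IB a0 \<rho>0 by (intro mult_left_mono) auto
    also have "\<dots> = (\<integral>x. a0 * \<rho> powr q * (m0 x - indicator Bx x *\<^sub>R m0 x) \<partial>lborel)"
      unfolding M_def using iB mi by simp
    also have "\<dots> \<le> (\<integral>x. a0 * norm (x + y) powr q * m0 x \<partial>lborel)"
      using iB mi Hi pw by (intro integral_mono) auto
    finally show ?thesis .
  qed
  moreover have "c0 > 0" unfolding c0_def using a0 \<rho>0 M0 by simp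
  ultimately show ?thesis by blast
qed

lemma opt_val:
  fixes A s q r :: real
  assumes A: "A > 0" and s: "s > 0" and q: "q > 0" and r: "r > 0"
  defines "\<tau> \<equiv> (q * A / (r * s)) powr (1 / (r + q))"
  shows "s * \<tau> powr r + A * \<tau> powr (- q) = ((q + r) / q) * (q * A / r) powr (r / (r + q)) * s powr (q / (r + q))"
proof -
  define W where "W = q * A / r"
  have W: "W > 0" unfolding W_def using A q r by simp
  have X: "q * A / (r * s) = W / s" unfolding W_def by simp
  have t1: "s * \<tau> powr r = W powr (r / (r + q)) * s powr (q / (r + q))"
  proof -
    have "s * \<tau> powr r = s * (W / s) powr (r / (r + q))"
      unfolding \<tau>_def X using W s q r by (simp add: powr_powr)
    also have "\<dots> = exp (ln s + (r / (r + q)) * (ln W - ln s))"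
      using W s by (simp add: powr_def exp_add ln_div)
    also have "ln s + (r / (r + q)) * (ln W - ln s) = (r / (r + q)) * ln W + (q / (r + q)) * ln s"
    proof -
      have e: "q / (r + q) = 1 - r / (r + q)" using q r by (simp add: field_simps)
      have g: "\<And>c. ln s + c * (ln W - ln s) = c * ln W + (1 - c) * ln s" by (simp add: algebra_simps)
      show ?thesis unfolding e by (rule g)
    qed
    also have "exp \<dots> = W powr (r / (r + q)) * s powr (q / (r + q))"
      using W s by (simp add: powr_def exp_add)
    finally show ?thesis .
  qed
  have t2: "A * \<tau> powr (- q) = (r / q) * (W powr (r / (r + q)) * s powr (q / (r + q)))"
  proof -
    have Aeq: "A = (r / q) * W" unfolding W_def using q r by simp
    have "A * \<tau> powr (- q) = (r / q) * (W * (W / s) powr (- q / (r + q)))"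
      unfolding \<tau>_def X using W s q r Aeq by (simp add: powr_powr)
    also have "W * (W / s) powr (- q / (r + q)) = exp (ln W + (- q / (r + q)) * (ln W - ln s))"
      using W s by (simp add: powr_def exp_diff exp_minus ln_div ln_mult ln_inverse divide_inverse)
    also have "ln W + (- q / (r + q)) * (ln W - ln s) = (r / (r + q)) * ln W + (q / (r + q)) * ln s"
    proof -
      have e: "q / (r + q) = 1 - r / (r + q)" using q r by (simp add: field_simps)
      have e2: "- q / (r + q) = - (q / (r + q))" by simp
      have g: "\<And>c. ln W + (- (1 - c)) * (ln W - ln s) = c * ln W + (1 - c) * ln s" by (simp add: algebra_simps)
      show ?thesis unfolding e2 e by (rule g)
    qed
    also have "exp \<dots> = W powr (r / (r + q)) * s powr (q / (r + q))"
      using W s by (simp add: powr_def exp_add)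
    finally show ?thesis .
  qed
  show ?thesis unfolding t1 t2 W_def[symmetric] using q by (simp add: field_simps)
qed

lemma eps_construct:
  fixes f :: "real \<Rightarrow> ereal" and g :: "real \<Rightarrow> real"
  assumes g: "\<forall>\<^sub>F x in F. g x > 0"
    and bnd: "\<And>\<eta>. \<eta> > 0 \<Longrightarrow> \<forall>\<^sub>F x in F. f x \<le> ereal ((1 + \<eta>) * g x)"
  shows "\<exists>\<epsilon>::real\<Rightarrow>real. (\<epsilon> \<longlongrightarrow> 0) F \<and> (\<forall>\<^sub>F x in F. f x \<le> ereal ((1 + \<epsilon> x) * g x))"
proof -
  define \<epsilon> where "\<epsilon> = (\<lambda>x. max 0 (real_of_ereal (f x) / g x - 1))"
  have key: "0 \<le> \<epsilon> x \<and> \<epsilon> x \<le> \<eta> \<and> f x \<le> ereal ((1 + \<epsilon> x) * g x)"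
    if gx: "g x > 0" and fx: "f x \<le> ereal ((1 + \<eta>) * g x)" and \<eta>: "\<eta> > 0" for x \<eta>
  proof (cases "f x")
    case (real v)
    have "v \<le> (1 + \<eta>) * g x" using fx real by simp
    then have "v / g x - 1 \<le> \<eta>" using gx by (simp add: field_simps)
    moreover have "v \<le> (1 + \<epsilon> x) * g x"
    proof -
      have "v / g x \<le> 1 + \<epsilon> x" unfolding \<epsilon>_def real by simp
      then show ?thesis using gx by (simp add: field_simps)
    qed
    ultimately show ?thesis unfolding \<epsilon>_def using real \<eta> by simp
  next
    case PInf then show ?thesis using fx by simp
  next
    case MInf then show ?thesis unfolding \<epsilon>_def using \<eta> by simp
  qed
  have "(\<epsilon> \<longlongrightarrow> 0) F"
  proof (rule tendstoI)
    fix e :: real assume e: "e > 0"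
    have "\<forall>\<^sub>F x in F. g x > 0 \<and> f x \<le> ereal ((1 + e/2) * g x)"
      using g bnd[of "e/2"] e by (auto intro: eventually_conj)
    then show "\<forall>\<^sub>F x in F. dist (\<epsilon> x) 0 < e"
    proof (rule eventually_mono)
      fix x assume "g x > 0 \<and> f x \<le> ereal ((1 + e/2) * g x)"
      then have "0 \<le> \<epsilon> x \<and> \<epsilon> x \<le> e/2" using key[of x "e/2"] e by auto
      then show "dist (\<epsilon> x) 0 < e" using e by simp
    qed
  qed
  moreover have "\<forall>\<^sub>F x in F. f x \<le> ereal ((1 + \<epsilon> x) * g x)"
    using eventually_conj[OF g bnd[OF zero_less_one]]
  proof (rule eventually_mono)
    fix x assume "0 < g x \<and> f x \<le> ereal ((1 + 1) * g x)"
    then show "f x \<le> ereal ((1 + \<epsilon> x) * g x)" using key[of x 1] by auto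
  qed
  ultimately show ?thesis by blast
qed

lemma ereal_term:
  assumes "ereal a * enn2ereal k = 1" "x \<ge> 0"
  shows "ereal a * enn2ereal (ennreal x * k) = ereal x"
proof -
  have "enn2ereal (ennreal x * k) = ereal x * enn2ereal k"
    using assms(2) by (simp add: times_ennreal.rep_eq enn2ereal_ennreal)
  then have "ereal a * enn2ereal (ennreal x * k) = ereal x * (ereal a * enn2ereal k)"
    by (simp add: mult_ac)
  then show ?thesis using assms(1) by simp
qed

lemma pot_coef:
  fixes c \<tau> r :: real and n :: nat
  assumes c: "c > 0" and \<tau>: "\<tau> > 0" and n: "n > 0"
  shows "(c * \<tau> ^ n) powr (1 + r / real n) / \<tau> ^ n = c powr (1 + r / real n) * \<tau> powr r"
proof -
  have "(c * \<tau> ^ n) powr (1 + r / real n) = c powr (1 + r / real n) * (\<tau> powr real n) powr (1 + r / real n)"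
    using c \<tau> by (simp add: powr_mult powr_realpow)
  also have "(\<tau> powr real n) powr (1 + r / real n) = \<tau> powr (real n + r)"
  proof -
    have "real n * (1 + r / real n) = real n + r" using n by (simp add: field_simps)
    then show ?thesis by (simp add: powr_powr)
  qed
  also have "\<tau> powr (real n + r) = \<tau> ^ n * \<tau> powr r"
    using \<tau> by (simp add: powr_add powr_realpow)
  finally show ?thesis using \<tau> by simp
qed

theorem lemma6p1:
  fixes V :: "'a::euclidean_space \<Rightarrow> real"
    and r' CH qhat b C2 \<delta> d C \<delta>1 :: real
    and l :: nat and P :: "nat \<Rightarrow> 'a" and a qq :: "nat \<Rightarrow> real"
    and m0 :: "'a \<Rightarrow> real" and w0 :: "'a \<Rightarrow> 'a"
  defines "n \<equiv> DIM('a)"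
    and "r \<equiv> conj_exp r'"
    and "Ms \<equiv> M_star r' CH qhat b TYPE('a)"
    and "q \<equiv> Max (qq ` {..<l})"
    and "Z \<equiv> {i. i < l \<and> qq i = Max (qq ` {..<l})}"
    and "H \<equiv> (\<lambda>i y. \<integral>x. a i * norm (x + y) powr qq i * m0 x \<partial>lborel)"
  assumes n2: "n \<ge> 2" and r'1: "r' > 1" and CH: "CH > 0" and b: "b > 0"
    and qhat: "qhat_ok n r qhat"
    and V_nonneg: "\<forall>x. V x \<ge> 0"
    and V_meas: "V \<in> borel_measurable lborel"
    and C2: "C2 > 0" and \<delta>: "\<delta> > 0"
    and V_growth: "\<exists>R. \<forall>x. norm x \<ge> R \<longrightarrow> V x \<le> C2 * exp (\<delta> * norm x)"
    and V_locbdd: "\<forall>K. compact K \<longrightarrow> bounded (V ` K)"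
    and l1: "l \<ge> 1" and P_inj: "inj_on P {..<l}"
    and V_zeros: "{x. V x = 0} = P ` {..<l}"
    and a_pos: "\<forall>i<l. a i > 0" and qq_pos: "\<forall>i<l. qq i > 0" and d: "d > 0"
    and V_asym: "\<exists>K. \<forall>i<l. \<forall>x. 0 < norm (x - P i) \<and> norm (x - P i) \<le> d \<longrightarrow>
                  \<bar>V x - a i * norm (x - P i) powr qq i\<bar> \<le> K * norm (x - P i) powr (qq i + 1)"
    and min_adm: "(m0, w0) \<in> Gamma_adm qhat b"
    and minimizer: "\<forall>(m, w) \<in> (Gamma_adm qhat b :: (('a \<Rightarrow> real) \<times> ('a \<Rightarrow> 'a)) set). Gamma_fun r' CH m0 w0 \<le> Gamma_fun r' CH m w"
    and mass: "(\<integral>x. m0 x \<partial>lborel) = Ms"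
    and norm1: "ereal (C_L r' CH) * enn2ereal (kin r m0 w0) = 1"
    and norm2: "ereal (real n / (real n + r)) * enn2ereal (pot (1 + r / real n) m0) = 1"
    and C: "C > 0" and \<delta>1: "\<delta>1 > 0"
    and decay: "\<forall>x. m0 x \<le> C * exp (- \<delta>1 * norm x)"
  shows "\<exists>\<epsilon> :: real \<Rightarrow> real. (\<epsilon> \<longlongrightarrow> 0) (at_left Ms) \<and>
     (\<forall>\<^sub>F M in at_left Ms.
        e_ground r' CH qhat V M \<le>
          ereal ((1 + \<epsilon> M) * ((q + r) / q)
            * (q * Min ((\<lambda>i. Inf (range (H i))) ` Z) / r) powr (r / (r + q))
            * (1 - (M / Ms) powr (r / real n)) powr (q / (r + q))))"
proof -
  have r'0: "r' - 1 > 0" using r'1 by simp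
  have r0: "r > 0" unfolding r_def conj_exp_def using r'1 by simp
  have n0: "n > 0" unfolding n_def by simp
  from min_adm have wp0: "weak_pair qhat m0 w0" and m0pos: "\<forall>x. m0 x \<ge> 0"
    and nAE: "\<not> (AE x in lborel. m0 x = 0)"
    unfolding Gamma_adm_def by auto
  have mi: "integrable lborel m0" using wp0 unfolding weak_pair_def by simp
  have m0m: "m0 \<in> borel_measurable lborel" using mi by simp
  have Ms0: "Ms > 0"
  proof -
    have "Ms \<ge> 0" unfolding mass[symmetric] using m0pos by (simp add: integral_nonneg)
    moreover have "Ms \<noteq> 0"
    proof
      assume "Ms = 0"
      then have "(\<integral>x. m0 x \<partial>lborel) = 0" using mass by simp
      then have "AE x in lborel. m0 x = 0"
        using integral_nonneg_eq_0_iff_AE[OF mi] m0pos by simp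
      then show False using nAE by simp
    qed
    ultimately show ?thesis by simp
  qed
  have fin: "finite Z" unfolding Z_def by simp
  have Zne: "Z \<noteq> {}"
  proof -
    have "Max (qq ` {..<l}) \<in> qq ` {..<l}" using l1 by (intro Max_in) (auto simp: lessThan_empty_iff)
    then show ?thesis unfolding Z_def by auto
  qed
  define \<mu> where "\<mu> = Min ((\<lambda>i. Inf (range (H i))) ` Z)"
  have "\<mu> \<in> (\<lambda>i. Inf (range (H i))) ` Z" unfolding \<mu>_def using fin Zne by (intro Min_in) auto
  then obtain i where iZ: "i \<in> Z" and i\<mu>: "Inf (range (H i)) = \<mu>" by auto
  have il: "i < l" and qi: "qq i = q" using iZ unfolding Z_def q_def by auto
  have q0: "q > 0" using qq_pos il qi by auto
  have ai: "a i > 0" using a_pos il by simp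
  obtain K where K: "\<forall>i<l. \<forall>x. 0 < norm (x - P i) \<and> norm (x - P i) \<le> d \<longrightarrow>
                  \<bar>V x - a i * norm (x - P i) powr qq i\<bar> \<le> K * norm (x - P i) powr (qq i + 1)"
    using V_asym by blast
  obtain R where R: "\<forall>x. norm x \<ge> R \<longrightarrow> V x \<le> C2 * exp (\<delta> * norm x)" using V_growth by blast
  obtain B where B: "\<forall>x\<in>cball 0 R. norm (V x) \<le> B"
    using V_locbdd[rule_format, of "cball 0 R"] unfolding bounded_iff by auto
  have VS: "Vsetup V m0 (P i) (a i) q d \<bar>K\<bar> B C2 \<delta> C \<delta>1 R"
  proof (unfold_locales)
    show "V (P i) = 0" using V_zeros il by auto
    show "\<forall>x. 0 < norm (x - P i) \<and> norm (x - P i) \<le> d \<longrightarrow>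
       \<bar>V x - a i * norm (x - P i) powr q\<bar> \<le> \<bar>K\<bar> * norm (x - P i) powr (q + 1)"
    proof (intro allI impI)
      fix x assume "0 < norm (x - P i) \<and> norm (x - P i) \<le> d"
      then have "\<bar>V x - a i * norm (x - P i) powr q\<bar> \<le> K * norm (x - P i) powr (q + 1)"
        using K il qi by auto
      also have "\<dots> \<le> \<bar>K\<bar> * norm (x - P i) powr (q + 1)" by (intro mult_right_mono) auto
      finally show "\<bar>V x - a i * norm (x - P i) powr q\<bar> \<le> \<bar>K\<bar> * norm (x - P i) powr (q + 1)" .
    qed
    show "\<forall>x. norm x \<le> R \<longrightarrow> V x \<le> B" using B by (auto simp: dist_norm) (meson abs_ge_self mem_cball_0 order.trans)
  qed (use V_meas V_nonneg m0m m0pos q0 d ai R C2 \<delta> decay \<delta>1 in auto)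
  have Hi: "\<forall>y. integrable lborel (\<lambda>x. a i * norm (x + y) powr q * m0 x)"
    using Vsetup.Jconv(3)[OF VS] by blast
  have Hform: "H i y = (\<integral>x. a i * norm (x + y) powr q * m0 x \<partial>lborel)" for y
    unfolding H_def qi ..
  have m0C: "\<forall>x. m0 x \<le> C"
  proof
    fix x :: 'a
    have "exp (- \<delta>1 * norm x) \<le> 1" using \<delta>1 by simp
    then show "m0 x \<le> C" using decay[rule_format, of x] C
      by (smt (verit) mult_left_le)
  qed
  obtain c0 where c0: "c0 > 0" "\<forall>y. H i y \<ge> c0"
    using Hpos[OF m0pos mi _ m0C ai q0 Hi] Ms0 mass unfolding Hform by auto
  have bddH: "bdd_below (range (H i))" using c0 by (auto intro: bdd_belowI)
  have \<mu>0: "\<mu> > 0"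
  proof -
    have "c0 \<le> Inf (range (H i))" using c0 by (intro cInf_greatest) auto
    then show ?thesis using i\<mu> c0 by simp
  qed
  define \<alpha> where "\<alpha> = r / real n"
  have \<alpha>0: "\<alpha> > 0" unfolding \<alpha>_def using r0 n0 by simp
  define g where "g = (\<lambda>M::real. ((q + r) / q) * (q * \<mu> / r) powr (r / (r + q)) * (1 - (M / Ms) powr \<alpha>) powr (q / (r + q)))"
  have evM: "\<forall>\<^sub>F M in at_left Ms. 0 < M \<and> M < Ms"
    using eventually_at_left_real[OF Ms0] by (rule eventually_mono) auto
  have spos: "0 < 1 - (M / Ms) powr \<alpha>" if "0 < M" "M < Ms" for M
  proof -
    have "(M / Ms) powr \<alpha> < 1 powr \<alpha>"
      using that Ms0 \<alpha>0 by (intro powr_less_mono2) auto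
    then show ?thesis by simp
  qed
  have gpos: "\<forall>\<^sub>F M in at_left Ms. g M > 0"
    using evM
  proof (rule eventually_mono)
    fix M assume "0 < M \<and> M < Ms"
    then have s: "0 < 1 - (M / Ms) powr \<alpha>" using spos by auto
    have "0 < q * \<mu> / r" using q0 r0 \<mu>0 by simp
    then show "g M > 0" unfolding g_def using s q0 r0
      by (intro mult_pos_pos divide_pos_pos) auto
  qed
  have slim: "((\<lambda>M. 1 - (M / Ms) powr \<alpha>) \<longlongrightarrow> 0) (at_left Ms)"
  proof -
    have "((\<lambda>M. M / Ms) \<longlongrightarrow> Ms / Ms) (at_left Ms)"
      using Ms0 by (intro tendsto_intros) auto
    then have "((\<lambda>M. M / Ms) \<longlongrightarrow> 1) (at_left Ms)" using Ms0 by simp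
    then have "((\<lambda>M. (M / Ms) powr \<alpha>) \<longlongrightarrow> 1 powr \<alpha>) (at_left Ms)"
      by (intro tendsto_powr) auto
    then have "((\<lambda>M. 1 - (M / Ms) powr \<alpha>) \<longlongrightarrow> 1 - 1 powr \<alpha>) (at_left Ms)"
      by (intro tendsto_diff tendsto_const)
    then show ?thesis by simp
  qed
  have key: "\<forall>\<^sub>F M in at_left Ms. e_ground r' CH qhat V M \<le> ereal ((1 + \<eta>) * g M)" if \<eta>: "\<eta> > 0" for \<eta>
  proof -
    define A where "A = \<mu> * (1 + \<eta>) powr ((r + q) / r)"
    have A\<mu>: "A > \<mu>" unfolding A_def using \<mu>0 \<eta> r0 q0 by simp
    have AF: "(q * A / r) powr (r / (r + q)) = (1 + \<eta>) * (q * \<mu> / r) powr (r / (r + q))"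
    proof -
      have e: "q * A / r = (q * \<mu> / r) * (1 + \<eta>) powr ((r + q) / r)" unfolding A_def by simp
      have "(q * A / r) powr (r / (r + q)) = (q * \<mu> / r) powr (r / (r + q)) * ((1 + \<eta>) powr ((r + q) / r)) powr (r / (r + q))"
        unfolding e using q0 r0 \<mu>0 \<eta> by (intro powr_mult)
      also have "((1 + \<eta>) powr ((r + q) / r)) powr (r / (r + q)) = 1 + \<eta>"
        using q0 r0 \<eta> by (simp add: powr_powr)
      finally show ?thesis by simp
    qed
    obtain y where y: "H i y < A"
      using cInf_lessD[of "range (H i)" A] i\<mu> A\<mu> by auto
    have Jlim: "((\<lambda>\<tau>. \<integral>z. \<tau> powr q * V (P i + (1/\<tau>) *\<^sub>R (z + y)) * m0 z \<partial>lborel) \<longlongrightarrow> H i y) at_top"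
      using Vsetup.Jconv(1)[OF VS, of y] unfolding Hform by (simp add: add.commute)
    have "\<forall>\<^sub>F \<tau> in at_top. (\<integral>z. \<tau> powr q * V (P i + (1/\<tau>) *\<^sub>R (z + y)) * m0 z \<partial>lborel) < A
        \<and> integrable lborel (\<lambda>z. V (P i + (1/\<tau>) *\<^sub>R (z + y)) * m0 z)"
      using order_tendstoD(2)[OF Jlim y] Vsetup.Jconv(2)[OF VS, of y] by (rule eventually_conj)
    then obtain N where N: "\<And>\<tau>. \<tau> \<ge> N \<Longrightarrow> (\<integral>z. \<tau> powr q * V (P i + (1/\<tau>) *\<^sub>R (z + y)) * m0 z \<partial>lborel) < A
        \<and> integrable lborel (\<lambda>z. V (P i + (1/\<tau>) *\<^sub>R (z + y)) * m0 z)"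
      unfolding eventually_at_top_linorder by blast
    define T1 where "T1 = max N 1"
    have T1: "T1 \<ge> 1" "T1 \<ge> N" unfolding T1_def by auto
    define s0 where "s0 = q * A / (r * T1 powr (r + q))"
    have s00: "s0 > 0" unfolding s0_def using q0 r0 A\<mu> \<mu>0 T1 by simp
    have "\<forall>\<^sub>F M in at_left Ms. (0 < M \<and> M < Ms) \<and> 1 - (M / Ms) powr \<alpha> < s0"
      using evM order_tendstoD(2)[OF slim s00] by (rule eventually_conj)
    then show ?thesis
    proof (rule eventually_mono)
      fix M assume "(0 < M \<and> M < Ms) \<and> 1 - (M / Ms) powr \<alpha> < s0"
      then have M0: "0 < M" and MMs: "M < Ms" and ss0: "1 - (M / Ms) powr \<alpha> < s0" by auto
      define c where "c = M / Ms"
      have c0: "c > 0" and c1: "c \<le> 1" unfolding c_def using M0 MMs Ms0 by auto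
      define s where "s = 1 - c powr \<alpha>"
      have s0: "s > 0" unfolding s_def c_def using spos[OF M0 MMs] .
      have ss: "s \<le> s0" unfolding s_def c_def using ss0 by simp
      define \<tau> where "\<tau> = (q * A / (r * s)) powr (1 / (r + q))"
      have A0: "A > 0" using A\<mu> \<mu>0 by simp
      have \<tau>T: "\<tau> \<ge> T1"
      proof -
        have "T1 powr (r + q) = q * A / (r * s0)" unfolding s0_def using q0 r0 A0 T1
          by (simp add: field_simps)
        also have "\<dots> \<le> q * A / (r * s)" using s0 ss q0 r0 A0
          by (intro divide_left_mono mult_left_mono) auto
        finally have "(T1 powr (r + q)) powr (1 / (r + q)) \<le> \<tau>"
          unfolding \<tau>_def using q0 r0 T1 by (intro powr_mono2) auto
        then show ?thesis using q0 r0 T1 by (simp add: powr_powr)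
      qed
      have \<tau>0: "\<tau> > 0" using \<tau>T T1 by simp
      have NT: "(\<integral>z. \<tau> powr q * V (P i + (1/\<tau>) *\<^sub>R (z + y)) * m0 z \<partial>lborel) < A
        \<and> integrable lborel (\<lambda>z. V (P i + (1/\<tau>) *\<^sub>R (z + y)) * m0 z)"
        using N \<tau>T T1 by simp
      define I where "I = (\<integral>z. V (P i + (1/\<tau>) *\<^sub>R (z + y)) * m0 z \<partial>lborel)"
      have I0: "I \<ge> 0" unfolding I_def using V_nonneg m0pos by (simp add: integral_nonneg)
      have IA: "\<tau> powr q * I < A"
        using NT unfolding I_def by (simp add: mult.assoc)
      define k where "k = c * \<tau> ^ DIM('a)"
      have k0: "k > 0" unfolding k_def using c0 \<tau>0 by simp
      define t where "t = - (\<tau> *\<^sub>R P i) - y"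
      define m where "m = (\<lambda>x. k * m0 (t + \<tau> *\<^sub>R x))"
      define w where "w = (\<lambda>x. k *\<^sub>R (\<tau> *\<^sub>R w0 (t + \<tau> *\<^sub>R x)))"
      note T = trial[where t=t, OF wp0 m0pos V_meas V_nonneg k0 \<tau>0,
          folded m_def w_def]
      have kd: "k / \<tau> ^ DIM('a) = c" unfolding k_def using \<tau>0 by simp
      have arg: "(1/\<tau>) *\<^sub>R (z - t) = P i + (1/\<tau>) *\<^sub>R (z + y)" for z
        unfolding t_def using \<tau>0 by (simp add: algebra_simps)
      have Vint: "(\<integral>\<^sup>+x. ennreal (V x * m x) \<partial>lborel) = ennreal (c * I)"
      proof -
        have "(\<integral>\<^sup>+z. ennreal (V ((1/\<tau>) *\<^sub>R (z - t)) * m0 z) \<partial>lborel) = ennreal I"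
          unfolding arg I_def using NT V_nonneg m0pos
          by (intro nn_integral_eq_integral) auto
        then show ?thesis using T(5) kd c0 I0 by (simp add: ennreal_mult m_def)
      qed
      have mass_m: "(\<integral>x. m x \<partial>lborel) = M"
        using T(2) kd mass unfolding c_def using Ms0 by simp
      have inK: "(m, w) \<in> K_set qhat V M"
        unfolding K_set_def using T(1) T(6) mass_m Vint by (auto simp: m_def)
      have kin_m: "kin r m w = ennreal (c * \<tau> powr r) * kin r m0 w0"
      proof -
        have "k * \<tau> powr r / \<tau> ^ DIM('a) = (k / \<tau> ^ DIM('a)) * \<tau> powr r" by simp
        then show ?thesis using T(3)[of r] kd by simp
      qed
      have pot_m: "pot (1 + r / real n) m = ennreal (c powr (1 + r / real n) * \<tau> powr r) * pot (1 + r / real n) m0"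
        using T(4) pot_coef[OF c0 \<tau>0, of "DIM('a)" r] unfolding k_def n_def by simp
      have "e_ground r' CH qhat V M \<le> energy r' CH V m w"
        unfolding e_ground_def using inK by (rule INF_lower2) simp
      also have "energy r' CH V m w = ereal (c * \<tau> powr r) + ereal (c * I) - ereal (c powr (1 + r / real n) * \<tau> powr r)"
      proof -
        have e1: "ereal (C_L r' CH) * enn2ereal (kin r m w) = ereal (c * \<tau> powr r)"
          unfolding kin_m using norm1 c0 \<tau>0 by (intro ereal_term) auto
        have e2: "ereal (real n / (real n + r)) * enn2ereal (pot (1 + r / real n) m) = ereal (c powr (1 + r / real n) * \<tau> powr r)"
          unfolding pot_m using norm2 c0 \<tau>0 by (intro ereal_term) auto
        have e3: "enn2ereal (\<integral>\<^sup>+x. ennreal (V x * m x) \<partial>lborel) = ereal (c * I)"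
          unfolding Vint using c0 I0 by (simp add: enn2ereal_ennreal)
        show ?thesis unfolding energy_def Let_def r_def[symmetric] n_def[symmetric] e1 e2 e3 ..
      qed
      also have "\<dots> = ereal (c * (s * \<tau> powr r + I))"
      proof -
        have "c powr (1 + r / real n) = c * c powr \<alpha>" unfolding \<alpha>_def using c0 by (simp add: powr_add)
        then show ?thesis unfolding s_def by (simp add: algebra_simps)
      qed
      also have "\<dots> \<le> ereal ((1 + \<eta>) * g M)"
      proof -
        have "I \<le> A * \<tau> powr (- q)"
          using IA \<tau>0 by (simp add: powr_minus field_simps)
        then have "s * \<tau> powr r + I \<le> s * \<tau> powr r + A * \<tau> powr (- q)" by simp
        also have "\<dots> = ((q + r) / q) * (q * A / r) powr (r / (r + q)) * s powr (q / (r + q))"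
          unfolding \<tau>_def by (rule opt_val[OF A0 s0 q0 r0])
        also have "\<dots> = (1 + \<eta>) * g M"
          unfolding AF g_def s_def c_def by simp
        finally have le: "s * \<tau> powr r + I \<le> (1 + \<eta>) * g M" .
        have "c * (s * \<tau> powr r + I) \<le> 1 * (s * \<tau> powr r + I)"
          using c1 s0 \<tau>0 I0 by (intro mult_right_mono) auto
        then show ?thesis using le by simp
      qed
      finally show "e_ground r' CH qhat V M \<le> ereal ((1 + \<eta>) * g M)" .
    qed
  qed
  have "\<exists>\<epsilon>::real\<Rightarrow>real. (\<epsilon> \<longlongrightarrow> 0) (at_left Ms) \<and> (\<forall>\<^sub>F M in at_left Ms. e_ground r' CH qhat V M \<le> ereal ((1 + \<epsilon> M) * g M))"
    by (rule eps_construct[OF gpos key])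
  then obtain \<epsilon> :: "real \<Rightarrow> real" where \<epsilon>: "(\<epsilon> \<longlongrightarrow> 0) (at_left Ms)"
    and ev: "\<forall>\<^sub>F M in at_left Ms. e_ground r' CH qhat V M \<le> ereal ((1 + \<epsilon> M) * g M)" by blast
  show ?thesis
  proof (intro exI conjI)
    show "(\<epsilon> \<longlongrightarrow> 0) (at_left Ms)" by (rule \<epsilon>)
    show "\<forall>\<^sub>F M in at_left Ms.
        e_ground r' CH qhat V M \<le>
          ereal ((1 + \<epsilon> M) * ((q + r) / q)
            * (q * Min ((\<lambda>i. Inf (range (H i))) ` Z) / r) powr (r / (r + q))
            * (1 - (M / Ms) powr (r / real n)) powr (q / (r + q)))"
      using ev by (rule eventually_mono) (simp add: g_def \<alpha>_def \<mu>_def mult.assoc)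
  qed
qed


end
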